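(* Let $\alpha\in\mathbb C$, $k\in\mathbb N$, $P_k:=\mathbb C[\rho,\varepsilon]/(\varepsilon^k)$, and define $T_{(\alpha,k)}:R\to P_k$ by $T_{(\alpha,k)}(f)=\sum_{i=0}^{k-1}f^{(i)}_\alpha\,\frac{\varepsilon^i}{i!}$. Then: (1) $T_{(\alpha,k)}$ is a $\mathbb C$-algebra homomorphism and $\ker T_{(\alpha,k)}=(l_\alpha^k)$; (2) the induced injective algebra homomorphism $\tau:R/(l_\alpha^k)\to P_k$ induces an isomorphism between the total rings of fractions of $R/(l_\alpha^k)$ and of $P_k$.
   Context: $R=\mathbb C[z_1,z_2]$, identified via polar coordinates $z_1=\rho\cos\varphi$, $z_2=\rho\sin\varphi$ with the subalgebra $\mathbb C[\rho\cos\varphi,\rho\sin\varphi]$ of analytic functions in $(\rho,\varphi)\in\mathbb C^2$. For $f\in R$, $\alpha\in\mathbb C$, $i\in\mathbb N_0$, let $f^{(i)}_\alpha:=\frac{\partial^i f}{\partial\varphi^i}\big|_{\varphi=\alpha}\in\mathbb C[\rho]$. Put $l_\alpha=-\sin(\alpha)z_1+\cos(\alpha)z_2=\rho\sin(\varphi-\alpha)$. *)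

theory Defs
  imports Complex_Main "HOL-Analysis.Derivative" "HOL-Algebra.QuotRing" "HOL-Computational_Algebra.Polynomial"
begin

definition type_ring :: "('a::comm_ring_1) ring" where
  "type_ring = \<lparr>carrier = UNIV, monoid.mult = (*), one = 1, zero = 0, add = (+)\<rparr>"

section \<open>R = C[z1,z2] as complex poly poly (inner variable z1, outer variable z2)\<close>

definition eval2 :: "complex poly poly \<Rightarrow> complex \<Rightarrow> complex \<Rightarrow> complex" where
  "eval2 f x1 x2 = poly (map_poly (\<lambda>c. poly c x1) f) x2"

definition phi_deriv :: "complex poly poly \<Rightarrow> nat \<Rightarrow> complex \<Rightarrow> complex poly" where
  "phi_deriv f i \<alpha> =
     (THE p. \<forall>\<rho>. poly p \<rho> = ((deriv ^^ i) (\<lambda>\<phi>. eval2 f (\<rho> * cos \<phi>) (\<rho> * sin \<phi>))) \<alpha>)"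

text \<open>l_alpha = - sin(alpha) z1 + cos(alpha) z2\<close>
definition l_lin :: "complex \<Rightarrow> complex poly poly" where
  "l_lin \<alpha> = [: [:0, - sin \<alpha>:], [:cos \<alpha>:] :]"

section \<open>P_k = C[rho,eps]/(eps^k), C[rho,eps] as complex poly poly (inner rho, outer eps)\<close>

definition eps :: "complex poly poly" where
  "eps = [:0, 1:]"

definition Pk :: "nat \<Rightarrow> complex poly poly set ring" where
  "Pk k = type_ring Quot (PIdl\<^bsub>type_ring\<^esub> (eps ^ k))"

definition Tmap :: "complex \<Rightarrow> nat \<Rightarrow> complex poly poly \<Rightarrow> complex poly poly set" where
  "Tmap \<alpha> k f = (PIdl\<^bsub>type_ring\<^esub> (eps ^ k)) +>\<^bsub>type_ring\<^esub>
      (\<Sum>i<k. monom (smult (1 / fact i) (phi_deriv f i \<alpha>)) i)"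

definition Rquot :: "complex \<Rightarrow> nat \<Rightarrow> complex poly poly set ring" where
  "Rquot \<alpha> k = type_ring Quot (PIdl\<^bsub>type_ring\<^esub> (l_lin \<alpha> ^ k))"

text \<open>map induced on a quotient by a map constant on cosets\<close>
definition quot_induced :: "('a \<Rightarrow> 'b) \<Rightarrow> 'a set \<Rightarrow> 'b" where
  "quot_induced h X = h (SOME x. x \<in> X)"

definition nzd :: "('a, 'm) ring_scheme \<Rightarrow> 'a set" where
  "nzd R = {s \<in> carrier R. \<forall>a \<in> carrier R. s \<otimes>\<^bsub>R\<^esub> a = \<zero>\<^bsub>R\<^esub> \<longrightarrow> a = \<zero>\<^bsub>R\<^esub>}"

definition frac_rel :: "('a, 'm) ring_scheme \<Rightarrow> (('a \<times> 'a) \<times> ('a \<times> 'a)) set" where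
  "frac_rel R = {((a, s), (b, t)). a \<in> carrier R \<and> s \<in> nzd R \<and> b \<in> carrier R \<and> t \<in> nzd R
                   \<and> a \<otimes>\<^bsub>R\<^esub> t = b \<otimes>\<^bsub>R\<^esub> s}"

definition total_frac :: "('a, 'm) ring_scheme \<Rightarrow> ('a \<times> 'a) set ring" where
  "total_frac R =
    \<lparr>carrier = (carrier R \<times> nzd R) // frac_rel R,
     monoid.mult = (\<lambda>X Y. \<Union>{frac_rel R `` {(a \<otimes>\<^bsub>R\<^esub> b, s \<otimes>\<^bsub>R\<^esub> t)} | a s b t. (a, s) \<in> X \<and> (b, t) \<in> Y}),
     one = frac_rel R `` {(\<one>\<^bsub>R\<^esub>, \<one>\<^bsub>R\<^esub>)},
     zero = frac_rel R `` {(\<zero>\<^bsub>R\<^esub>, \<one>\<^bsub>R\<^esub>)},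
     add = (\<lambda>X Y. \<Union>{frac_rel R `` {(a \<otimes>\<^bsub>R\<^esub> t \<oplus>\<^bsub>R\<^esub> b \<otimes>\<^bsub>R\<^esub> s, s \<otimes>\<^bsub>R\<^esub> t)}
                       | a s b t. (a, s) \<in> X \<and> (b, t) \<in> Y})\<rparr>"

definition frac_map :: "('b, 'n) ring_scheme \<Rightarrow> ('a \<Rightarrow> 'b) \<Rightarrow> ('a \<times> 'a) set \<Rightarrow> ('b \<times> 'b) set" where
  "frac_map S h X = \<Union>{frac_rel S `` {(h a, h s)} | a s. (a, s) \<in> X}"

end

theory Submission
  imports Defs "HOL-Complex_Analysis.Complex_Analysis"
begin

lemma type_ring_simps [simp]:
  "carrier type_ring = UNIV" "mult type_ring = (*)" "one type_ring = 1"
  "zero type_ring = 0" "add type_ring = (+)"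
  by (simp_all add: type_ring_def)

lemma cring_type_ring: "cring (type_ring :: ('a::comm_ring_1) ring)"
proof (rule cringI)
  show "abelian_group (type_ring :: 'a ring)"
    by (rule abelian_groupI) (auto simp: algebra_simps intro: exI[of _ "-x" for x])
  show "comm_monoid (type_ring :: 'a ring)"
    by (rule comm_monoidI) (auto simp: algebra_simps)
qed (simp add: algebra_simps)

definition cls :: "'a::comm_ring_1 \<Rightarrow> 'a \<Rightarrow> 'a set" where
  "cls d x = {y. d dvd y - x}"

lemma PIdl_tr: "PIdl\<^bsub>type_ring\<^esub> (d::'a::comm_ring_1) = {y. d dvd y}"
  unfolding cgenideal_def by (auto simp: dvd_def mult.commute)

lemma coset_tr: "PIdl\<^bsub>type_ring\<^esub> (d::'a::comm_ring_1) +>\<^bsub>type_ring\<^esub> x = cls d x"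
  unfolding PIdl_tr a_r_coset_def' cls_def
  by auto

lemma cls_eq_iff: "cls d x = cls d y \<longleftrightarrow> d dvd x - y"
proof
  assume "cls d x = cls d y"
  moreover have "x \<in> cls d x" by (simp add: cls_def)
  ultimately show "d dvd x - y" by (simp add: cls_def)
next
  assume a: "d dvd x - y"
  show "cls d x = cls d y"
    unfolding cls_def using a
    by (auto, metis diff_add_cancel dvd_add add_diff_eq diff_diff_eq2,
        metis dvd_diff diff_diff_eq2 diff_add_cancel)
qed

lemma ideal_tr: "ideal (PIdl\<^bsub>type_ring\<^esub> (d::'a::comm_ring_1)) type_ring"
  by (rule cring.cgenideal_ideal[OF cring_type_ring]) simp

lemma cring_quot: "cring (type_ring Quot PIdl\<^bsub>type_ring\<^esub> (d::'a::comm_ring_1))"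
  by (rule ideal.quotient_is_cring[OF ideal_tr cring_type_ring])

lemma quot_carrier: "carrier (type_ring Quot PIdl\<^bsub>type_ring\<^esub> (d::'a::comm_ring_1)) = range (cls d)"
  unfolding FactRing_def A_RCOSETS_def' by (auto simp: coset_tr)

lemma quot_zero: "zero (type_ring Quot PIdl\<^bsub>type_ring\<^esub> (d::'a::comm_ring_1)) = cls d 0"
  unfolding FactRing_def by (simp add: PIdl_tr cls_def)

lemma quot_one: "one (type_ring Quot PIdl\<^bsub>type_ring\<^esub> (d::'a::comm_ring_1)) = cls d 1"
  unfolding FactRing_def by (simp add: coset_tr)

lemma quot_mult: "mult (type_ring Quot PIdl\<^bsub>type_ring\<^esub> (d::'a::comm_ring_1)) (cls d x) (cls d y) = cls d (x*y)"
  using ideal.rcoset_mult_add[OF ideal_tr, of x y] unfolding FactRing_def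
  by (simp add: coset_tr)

lemma quot_add: "add (type_ring Quot PIdl\<^bsub>type_ring\<^esub> (d::'a::comm_ring_1)) (cls d x) (cls d y) = cls d (x+y)"
  unfolding FactRing_def set_add_def' 
proof (simp, safe)
  fix z a b assume "a \<in> cls d x" "b \<in> cls d y"
  then show "a + b \<in> cls d (x+y)" unfolding cls_def
    by (simp, metis add_diff_add dvd_add)
next
  fix z assume "z \<in> cls d (x+y)"
  then have "z - y \<in> cls d x" "y \<in> cls d y" unfolding cls_def by (simp_all add: algebra_simps)
  then show "z \<in> (\<Union>a\<in>cls d x. \<Union>b\<in>cls d y. {a + b})" by force
qed

context cring
begin

lemma rme: "a \<in> carrier R \<Longrightarrow> b \<in> carrier R \<Longrightarrow> a \<ominus> b = \<zero> \<longleftrightarrow> a = b"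
  by (metis a_minus_def add.inv_closed minus_equality r_neg)

lemma nzd_carrier: "s \<in> nzd R \<Longrightarrow> s \<in> carrier R"
  by (simp add: nzd_def)

lemma nzd_cancel:
  assumes "s \<in> nzd R" "x \<in> carrier R" "y \<in> carrier R" "s \<otimes> x = s \<otimes> y"
  shows "x = y"
proof -
  have s: "s \<in> carrier R" using assms(1) by (simp add: nzd_def)
  have "s \<otimes> (x \<ominus> y) = s \<otimes> x \<ominus> s \<otimes> y" using s assms by algebra
  also have "\<dots> = \<zero>" using assms s by (simp add: a_minus_def r_neg)
  finally have e: "s \<otimes> (x \<ominus> y) = \<zero>" .
  have xy: "x \<ominus> y \<in> carrier R" using assms by simp
  have "x \<ominus> y = \<zero>" using assms(1) xy e unfolding nzd_def by blast
  then show ?thesis using assms rme by blast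

qed

lemma nzd_mult: assumes "s \<in> nzd R" "t \<in> nzd R" shows "s \<otimes> t \<in> nzd R"
proof -
  have sc: "s \<in> carrier R" "t \<in> carrier R" using assms nzd_carrier by blast+
  have "a = \<zero>" if a: "a \<in> carrier R" "s \<otimes> t \<otimes> a = \<zero>" for a
  proof -
    have "s \<otimes> (t \<otimes> a) = \<zero>" using a sc by (simp add: m_assoc)
    moreover have "t \<otimes> a \<in> carrier R" using a sc by simp
    ultimately have "t \<otimes> a = \<zero>" using assms(1) unfolding nzd_def by blast
    then show "a = \<zero>" using assms(2) a unfolding nzd_def by blast
  qed
  then show ?thesis using sc unfolding nzd_def by blast
qed

lemma nzdD: "s \<in> nzd R \<Longrightarrow> x \<in> carrier R \<Longrightarrow> s \<otimes> x = \<zero> \<Longrightarrow> x = \<zero>"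
  unfolding nzd_def by blast

lemma one_nzd: "\<one> \<in> nzd R"
  unfolding nzd_def by auto

lemma frac_rel_iff: "((a,s),(b,t)) \<in> frac_rel R \<longleftrightarrow>
  a \<in> carrier R \<and> s \<in> nzd R \<and> b \<in> carrier R \<and> t \<in> nzd R \<and> a \<otimes> t = b \<otimes> s"
  by (simp add: frac_rel_def)

lemma equiv_frac: "equiv (carrier R \<times> nzd R) (frac_rel R)"
proof (rule equivI)
  show "refl_on (carrier R \<times> nzd R) (frac_rel R)"
    by (rule refl_onI) (auto simp: frac_rel_def)
  show "sym (frac_rel R)"
    by (rule symI) (auto simp: frac_rel_def)
  show "trans (frac_rel R)"
  proof (rule transI)
    fix x y z assume xy: "(x,y) \<in> frac_rel R" and yz: "(y,z) \<in> frac_rel R"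
    obtain a s where x: "x = (a,s)" by force
    obtain b t where y: "y = (b,t)" by force
    obtain c u where z: "z = (c,u)" by force
    have c: "a \<in> carrier R" "b \<in> carrier R" "c \<in> carrier R" "s \<in> carrier R" "t \<in> carrier R" "u \<in> carrier R"
      and tn: "t \<in> nzd R" and e1: "a \<otimes> t = b \<otimes> s" and e2: "b \<otimes> u = c \<otimes> t"
      using xy yz nzd_carrier by (auto simp: x y z frac_rel_def)
    have "t \<otimes> (a \<otimes> u) = (a \<otimes> t) \<otimes> u" using c by algebra
    also have "\<dots> = s \<otimes> (b \<otimes> u)" using c e1 by (simp add: m_ac)
    also have "\<dots> = t \<otimes> (c \<otimes> s)" using c e2 by (simp add: m_ac)
    finally have "a \<otimes> u = c \<otimes> s" using nzd_cancel[OF tn] c by simp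
    then show "(x,z) \<in> frac_rel R" using xy yz by (auto simp: x y z frac_rel_def)
  qed
  show "frac_rel R \<subseteq> (carrier R \<times> nzd R) \<times> (carrier R \<times> nzd R)"
    by (auto simp: frac_rel_def)
qed

lemma frac_class_eq:
  "((a,s),(b,t)) \<in> frac_rel R \<Longrightarrow> frac_rel R `` {(a,s)} = frac_rel R `` {(b,t)}"
  by (rule equiv_class_eq[OF equiv_frac])

lemma frac_class_eq_iff:
  assumes "a \<in> carrier R" "s \<in> nzd R" "b \<in> carrier R" "t \<in> nzd R"
  shows "frac_rel R `` {(a,s)} = frac_rel R `` {(b,t)} \<longleftrightarrow> a \<otimes> t = b \<otimes> s"
  using eq_equiv_class_iff[OF equiv_frac, of "(a,s)" "(b,t)"] assms by (auto simp: frac_rel_def)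

lemma frac_self: "a \<in> carrier R \<Longrightarrow> s \<in> nzd R \<Longrightarrow> (a,s) \<in> frac_rel R `` {(a,s)}"
  by (auto simp: frac_rel_def)

lemma frac_carrier_iff: "X \<in> carrier (total_frac R) \<longleftrightarrow>
   (\<exists>a s. a \<in> carrier R \<and> s \<in> nzd R \<and> X = frac_rel R `` {(a,s)})"
  unfolding total_frac_def by (auto simp: quotient_def)

lemma union_const: "(\<And>X. X \<in> M \<Longrightarrow> X = C) \<Longrightarrow> C \<in> M \<Longrightarrow> \<Union>M = C"
  by blast

lemma tf_mult:
  assumes "a \<in> carrier R" "s \<in> nzd R" "b \<in> carrier R" "t \<in> nzd R"
  shows "mult (total_frac R) (frac_rel R `` {(a,s)}) (frac_rel R `` {(b,t)})
     = frac_rel R `` {(a \<otimes> b, s \<otimes> t)}"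
  unfolding total_frac_def monoid.simps
proof (rule union_const)
  show "frac_rel R `` {(a \<otimes> b, s \<otimes> t)} \<in> {frac_rel R `` {(a' \<otimes> b', s' \<otimes> t')} |a' s' b' t'.
          (a', s') \<in> frac_rel R `` {(a, s)} \<and> (b', t') \<in> frac_rel R `` {(b, t)}}"
    using assms frac_self by blast
  fix X assume "X \<in> {frac_rel R `` {(a' \<otimes> b', s' \<otimes> t')} |a' s' b' t'.
          (a', s') \<in> frac_rel R `` {(a, s)} \<and> (b', t') \<in> frac_rel R `` {(b, t)}}"
  then obtain a' s' b' t' where X: "X = frac_rel R `` {(a' \<otimes> b', s' \<otimes> t')}"
    and r1: "((a,s),(a',s')) \<in> frac_rel R" and r2: "((b,t),(b',t')) \<in> frac_rel R" by auto
  have c: "a' \<in> carrier R" "s' \<in> nzd R" "b' \<in> carrier R" "t' \<in> nzd R"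
     "a \<otimes> s' = a' \<otimes> s" "b \<otimes> t' = b' \<otimes> t" using r1 r2 by (auto simp: frac_rel_def)
  have cc: "s \<in> carrier R" "t \<in> carrier R" "s' \<in> carrier R" "t' \<in> carrier R"
    using c assms nzd_carrier by blast+
  have "(a' \<otimes> b') \<otimes> (s \<otimes> t) = (a' \<otimes> s) \<otimes> (b' \<otimes> t)" using c(1,3) cc assms(1,3) by algebra
  also have "\<dots> = (a \<otimes> s') \<otimes> (b \<otimes> t')" by (simp only: c(5) c(6))
  also have "\<dots> = (a \<otimes> b) \<otimes> (s' \<otimes> t')" using c(1,3) cc assms(1,3) by algebra
  finally have "((a' \<otimes> b', s' \<otimes> t'), (a \<otimes> b, s \<otimes> t)) \<in> frac_rel R"
    using c assms by (auto simp: frac_rel_def nzd_mult)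
  then show "X = frac_rel R `` {(a \<otimes> b, s \<otimes> t)}" unfolding X by (rule frac_class_eq)
qed

lemma tf_add:
  assumes "a \<in> carrier R" "s \<in> nzd R" "b \<in> carrier R" "t \<in> nzd R"
  shows "add (total_frac R) (frac_rel R `` {(a,s)}) (frac_rel R `` {(b,t)})
     = frac_rel R `` {(a \<otimes> t \<oplus> b \<otimes> s, s \<otimes> t)}"
  unfolding total_frac_def ring.simps
proof (rule union_const)
  show "frac_rel R `` {(a \<otimes> t \<oplus> b \<otimes> s, s \<otimes> t)} \<in> {frac_rel R `` {(a' \<otimes> t' \<oplus> b' \<otimes> s', s' \<otimes> t')} |a' s' b' t'.
          (a', s') \<in> frac_rel R `` {(a, s)} \<and> (b', t') \<in> frac_rel R `` {(b, t)}}"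
    using assms frac_self by blast
  fix X assume "X \<in> {frac_rel R `` {(a' \<otimes> t' \<oplus> b' \<otimes> s', s' \<otimes> t')} |a' s' b' t'.
          (a', s') \<in> frac_rel R `` {(a, s)} \<and> (b', t') \<in> frac_rel R `` {(b, t)}}"
  then obtain a' s' b' t' where X: "X = frac_rel R `` {(a' \<otimes> t' \<oplus> b' \<otimes> s', s' \<otimes> t')}"
    and r1: "((a,s),(a',s')) \<in> frac_rel R" and r2: "((b,t),(b',t')) \<in> frac_rel R" by auto
  have c: "a' \<in> carrier R" "s' \<in> nzd R" "b' \<in> carrier R" "t' \<in> nzd R"
     "a \<otimes> s' = a' \<otimes> s" "b \<otimes> t' = b' \<otimes> t" using r1 r2 by (auto simp: frac_rel_def)
  have cc: "s \<in> carrier R" "t \<in> carrier R" "s' \<in> carrier R" "t' \<in> carrier R"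
    using c assms nzd_carrier by blast+
  have "(a' \<otimes> t' \<oplus> b' \<otimes> s') \<otimes> (s \<otimes> t) = (a' \<otimes> s) \<otimes> (t' \<otimes> t) \<oplus> (b' \<otimes> t) \<otimes> (s' \<otimes> s)"
    using c(1,3) cc assms(1,3) by algebra
  also have "\<dots> = (a \<otimes> s') \<otimes> (t' \<otimes> t) \<oplus> (b \<otimes> t') \<otimes> (s' \<otimes> s)" by (simp only: c(5) c(6))
  also have "\<dots> = (a \<otimes> t \<oplus> b \<otimes> s) \<otimes> (s' \<otimes> t')" using c(1,3) cc assms(1,3) by algebra
  finally have "((a' \<otimes> t' \<oplus> b' \<otimes> s', s' \<otimes> t'), (a \<otimes> t \<oplus> b \<otimes> s, s \<otimes> t)) \<in> frac_rel R"
    using c cc assms by (auto simp: frac_rel_def nzd_mult)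
  then show "X = frac_rel R `` {(a \<otimes> t \<oplus> b \<otimes> s, s \<otimes> t)}" unfolding X by (rule frac_class_eq)
qed

lemma tf_one: "one (total_frac R) = frac_rel R `` {(\<one>, \<one>)}"
  by (simp add: total_frac_def)

end

lemma frac_map_class:
  assumes A: "cring A" and B: "cring B" and h: "h \<in> ring_hom A B"
  and nz: "\<forall>s\<in>nzd A. h s \<in> nzd B"
  and a: "a \<in> carrier A" and s: "s \<in> nzd A"
  shows "frac_map B h (frac_rel A `` {(a,s)}) = frac_rel B `` {(h a, h s)}"
  unfolding frac_map_def
proof (rule cring.union_const[OF B])
  show "frac_rel B `` {(h a, h s)} \<in> {frac_rel B `` {(h a', h s')} |a' s'. (a', s') \<in> frac_rel A `` {(a, s)}}"
    using cring.frac_self[OF A a s] by blast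
  fix X assume "X \<in> {frac_rel B `` {(h a', h s')} |a' s'. (a', s') \<in> frac_rel A `` {(a, s)}}"
  then obtain a' s' where X: "X = frac_rel B `` {(h a', h s')}" and r: "((a,s),(a',s')) \<in> frac_rel A"
    by auto
  have c: "a' \<in> carrier A" "s' \<in> nzd A" "a \<otimes>\<^bsub>A\<^esub> s' = a' \<otimes>\<^bsub>A\<^esub> s"
    using r by (auto simp: frac_rel_def)
  have sc: "s \<in> carrier A" "s' \<in> carrier A" using s c cring.nzd_carrier[OF A] by blast+

  have "h a' \<otimes>\<^bsub>B\<^esub> h s = h a \<otimes>\<^bsub>B\<^esub> h s'"
    using c sc a h by (metis ring_hom_mult)
  then have "((h a', h s'), (h a, h s)) \<in> frac_rel B"
    using c a s nz h sc by (auto simp: frac_rel_def ring_hom_closed)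
  then show "X = frac_rel B `` {(h a, h s)}" unfolding X by (rule cring.frac_class_eq[OF B])
qed

lemma frac_iso_gen:
  assumes A: "cring A" and B: "cring B" and h: "h \<in> ring_hom A B"
  and inj: "inj_on h (carrier A)"
  and nz: "\<forall>s\<in>nzd A. h s \<in> nzd B"
  and surj: "\<forall>b\<in>carrier B. \<exists>a\<in>carrier A. \<exists>s\<in>nzd A. b \<otimes>\<^bsub>B\<^esub> h s = h a"
  shows "frac_map B h \<in> ring_iso (total_frac A) (total_frac B)"
proof -
  interpret A: cring A by (rule A)
  interpret B: cring B by (rule B)
  note fm = frac_map_class[OF A B h nz]
  have hc: "\<And>x. x \<in> carrier A \<Longrightarrow> h x \<in> carrier B" using h by (simp add: ring_hom_closed)
  have hm: "\<And>x y. x \<in> carrier A \<Longrightarrow> y \<in> carrier A \<Longrightarrow> h (x \<otimes>\<^bsub>A\<^esub> y) = h x \<otimes>\<^bsub>B\<^esub> h y"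
    using h by (simp add: ring_hom_mult)
  have ha: "\<And>x y. x \<in> carrier A \<Longrightarrow> y \<in> carrier A \<Longrightarrow> h (x \<oplus>\<^bsub>A\<^esub> y) = h x \<oplus>\<^bsub>B\<^esub> h y"
    using h by (simp add: ring_hom_add)
  have h1: "h \<one>\<^bsub>A\<^esub> = \<one>\<^bsub>B\<^esub>" using h by (simp add: ring_hom_one)
  have h0: "h \<zero>\<^bsub>A\<^esub> = \<zero>\<^bsub>B\<^esub>" using ring_hom_zero[OF h] A.ring_axioms B.ring_axioms by blast
  have nzc: "\<And>s. s \<in> nzd A \<Longrightarrow> s \<in> carrier A" by (simp add: nzd_def)
  have nzcB: "\<And>s. s \<in> nzd B \<Longrightarrow> s \<in> carrier B" by (simp add: nzd_def)
  have hom: "frac_map B h \<in> ring_hom (total_frac A) (total_frac B)"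
  proof (rule ring_hom_memI)
    fix X assume "X \<in> carrier (total_frac A)"
    then obtain a s where as: "a \<in> carrier A" "s \<in> nzd A" "X = frac_rel A `` {(a,s)}"
      by (auto simp: A.frac_carrier_iff)
    then have "frac_map B h X = frac_rel B `` {(h a, h s)}" using fm by simp
    then show "frac_map B h X \<in> carrier (total_frac B)"
      unfolding B.frac_carrier_iff using hc[OF as(1)] nz as(2) by blast

  next
    fix X Y assume "X \<in> carrier (total_frac A)" "Y \<in> carrier (total_frac A)"
    then obtain a s b t where as: "a \<in> carrier A" "s \<in> nzd A" "X = frac_rel A `` {(a,s)}"
      and bt: "b \<in> carrier A" "t \<in> nzd A" "Y = frac_rel A `` {(b,t)}"
      by (auto simp: A.frac_carrier_iff)
    show "frac_map B h (X \<otimes>\<^bsub>total_frac A\<^esub> Y) = frac_map B h X \<otimes>\<^bsub>total_frac B\<^esub> frac_map B h Y"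
      using as bt A.tf_mult B.tf_mult fm nz hc hm nzc A.nzd_mult by simp
    show "frac_map B h (X \<oplus>\<^bsub>total_frac A\<^esub> Y) = frac_map B h X \<oplus>\<^bsub>total_frac B\<^esub> frac_map B h Y"
      using as bt A.tf_add B.tf_add fm nz hc hm ha nzc A.nzd_mult by simp
  next
    show "frac_map B h \<one>\<^bsub>total_frac A\<^esub> = \<one>\<^bsub>total_frac B\<^esub>"
      using A.tf_one B.tf_one fm A.one_nzd h1 by simp
  qed
  have injf: "inj_on (frac_map B h) (carrier (total_frac A))"
  proof (rule inj_onI)
    fix X Y assume "X \<in> carrier (total_frac A)" "Y \<in> carrier (total_frac A)"
      and e: "frac_map B h X = frac_map B h Y"
    then obtain a s b t where as: "a \<in> carrier A" "s \<in> nzd A" "X = frac_rel A `` {(a,s)}"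
      and bt: "b \<in> carrier A" "t \<in> nzd A" "Y = frac_rel A `` {(b,t)}"
      by (auto simp: A.frac_carrier_iff)
    have "h a \<otimes>\<^bsub>B\<^esub> h t = h b \<otimes>\<^bsub>B\<^esub> h s"
      using e as bt fm B.frac_class_eq_iff[of "h a" "h s" "h b" "h t"] hc nz by simp
    then have "h (a \<otimes>\<^bsub>A\<^esub> t) = h (b \<otimes>\<^bsub>A\<^esub> s)" using hm as bt nzc by simp
    then have "a \<otimes>\<^bsub>A\<^esub> t = b \<otimes>\<^bsub>A\<^esub> s" using inj as bt nzc by (auto dest: inj_onD)
    then show "X = Y" using as bt A.frac_class_eq_iff by simp
  qed
  have surjf: "frac_map B h ` carrier (total_frac A) = carrier (total_frac B)"
  proof
    show "frac_map B h ` carrier (total_frac A) \<subseteq> carrier (total_frac B)"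
      using hom by (auto simp: ring_hom_def)
  next
    show "carrier (total_frac B) \<subseteq> frac_map B h ` carrier (total_frac A)"
    proof
      fix Y assume "Y \<in> carrier (total_frac B)"
      then obtain b t where bt: "b \<in> carrier B" "t \<in> nzd B" "Y = frac_rel B `` {(b,t)}"
        by (auto simp: B.frac_carrier_iff)
      obtain a1 s1 where 1: "a1 \<in> carrier A" "s1 \<in> nzd A" "b \<otimes>\<^bsub>B\<^esub> h s1 = h a1"
        using surj bt by blast
      obtain a2 s2 where 2: "a2 \<in> carrier A" "s2 \<in> nzd A" "t \<otimes>\<^bsub>B\<^esub> h s2 = h a2"
        using surj bt nzcB by blast
      have hs: "h s1 \<in> nzd B" "h s2 \<in> nzd B" using 1 2 nz by auto
      have a2n: "a2 \<in> nzd A"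
        unfolding nzd_def
      proof (safe)
        show "a2 \<in> carrier A" by fact
        fix x assume x: "x \<in> carrier A" "a2 \<otimes>\<^bsub>A\<^esub> x = \<zero>\<^bsub>A\<^esub>"
        then have "h a2 \<otimes>\<^bsub>B\<^esub> h x = \<zero>\<^bsub>B\<^esub>" using hm[OF 2(1) x(1)] h0 by simp
        then have "(t \<otimes>\<^bsub>B\<^esub> h s2) \<otimes>\<^bsub>B\<^esub> h x = \<zero>\<^bsub>B\<^esub>" using 2(3) by simp
        moreover have "t \<in> carrier B" "h s2 \<in> carrier B" "h x \<in> carrier B"
          using bt(2) nzcB hs(2) hc x(1) by auto
        ultimately have "t \<otimes>\<^bsub>B\<^esub> (h s2 \<otimes>\<^bsub>B\<^esub> h x) = \<zero>\<^bsub>B\<^esub>"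
          using B.m_assoc by simp

        moreover have "h s2 \<otimes>\<^bsub>B\<^esub> h x \<in> carrier B" using hs(2) nzcB hc x(1) by auto
        ultimately have "h s2 \<otimes>\<^bsub>B\<^esub> h x = \<zero>\<^bsub>B\<^esub>" using bt(2) B.nzdD by blast
        then have "h x = \<zero>\<^bsub>B\<^esub>" using hs(2) x hc B.nzdD by blast

        then have "h x = h \<zero>\<^bsub>A\<^esub>" using h0 by simp
        then show "x = \<zero>\<^bsub>A\<^esub>" using inj x by (auto dest: inj_onD)
      qed
      have c: "b \<in> carrier B" "t \<in> carrier B" "h s1 \<in> carrier B" "h s2 \<in> carrier B"
        using bt hs nzcB by auto
      have "(h a1 \<otimes>\<^bsub>B\<^esub> h s2) \<otimes>\<^bsub>B\<^esub> t = b \<otimes>\<^bsub>B\<^esub> (h s1 \<otimes>\<^bsub>B\<^esub> h a2)"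
      proof -
        have "(h a1 \<otimes>\<^bsub>B\<^esub> h s2) \<otimes>\<^bsub>B\<^esub> t = ((b \<otimes>\<^bsub>B\<^esub> h s1) \<otimes>\<^bsub>B\<^esub> h s2) \<otimes>\<^bsub>B\<^esub> t"
          using 1 by simp
        also have "\<dots> = b \<otimes>\<^bsub>B\<^esub> (h s1 \<otimes>\<^bsub>B\<^esub> (t \<otimes>\<^bsub>B\<^esub> h s2))"
          using c by (simp add: B.m_ac)
        also have "\<dots> = b \<otimes>\<^bsub>B\<^esub> (h s1 \<otimes>\<^bsub>B\<^esub> h a2)" using 2 by simp
        finally show ?thesis .
      qed
      then have e2: "h (a1 \<otimes>\<^bsub>A\<^esub> s2) \<otimes>\<^bsub>B\<^esub> t = b \<otimes>\<^bsub>B\<^esub> h (s1 \<otimes>\<^bsub>A\<^esub> a2)"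
        using hm 1 2 nzc by simp
      have hn: "h (s1 \<otimes>\<^bsub>A\<^esub> a2) \<in> nzd B" using nz A.nzd_mult 1(2) a2n by blast
      have hc1: "h (a1 \<otimes>\<^bsub>A\<^esub> s2) \<in> carrier B" using hc 1 2 nzc by simp
      have eq: "frac_rel B `` {(h (a1 \<otimes>\<^bsub>A\<^esub> s2), h (s1 \<otimes>\<^bsub>A\<^esub> a2))} = Y"
        using B.frac_class_eq_iff[OF hc1 hn bt(1,2)] e2 bt(3) by simp

      have "frac_rel A `` {(a1 \<otimes>\<^bsub>A\<^esub> s2, s1 \<otimes>\<^bsub>A\<^esub> a2)} \<in> carrier (total_frac A)"
        unfolding A.frac_carrier_iff
        using 1 2 a2n A.nzd_mult[OF 1(2) a2n] nzc A.m_closed[of a1 s2] by blast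

      moreover have "frac_map B h (frac_rel A `` {(a1 \<otimes>\<^bsub>A\<^esub> s2, s1 \<otimes>\<^bsub>A\<^esub> a2)}) = Y"
        using fm 1 2 a2n A.nzd_mult nzc eq by simp
      ultimately show "Y \<in> frac_map B h ` carrier (total_frac A)" by blast
    qed
  qed
  show ?thesis using hom injf surjf unfolding ring_iso_def bij_betw_def by simp
qed

definition G :: "complex \<Rightarrow> complex poly poly \<Rightarrow> complex \<Rightarrow> complex" where
  "G \<rho> f = (\<lambda>\<phi>. eval2 f (\<rho> * cos \<phi>) (\<rho> * sin \<phi>))"

lemma eval2_alt: "eval2 f x1 x2 = poly (poly f [:x2:]) x1"
  unfolding eval2_def
  by (induction f) (simp_all add: map_poly_pCons)

lemma G_add: "G \<rho> (f + g) = (\<lambda>\<phi>. G \<rho> f \<phi> + G \<rho> g \<phi>)"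
  by (simp add: G_def eval2_alt)
lemma G_mult: "G \<rho> (f * g) = (\<lambda>\<phi>. G \<rho> f \<phi> * G \<rho> g \<phi>)"
  by (simp add: G_def eval2_alt)
lemma G_const: "G \<rho> [:[:c:]:] = (\<lambda>\<phi>. c)"
  by (simp add: G_def eval2_alt)
lemma G_z1: "G \<rho> [:[:0,1:]:] = (\<lambda>\<phi>. \<rho> * cos \<phi>)"
  by (simp add: G_def eval2_alt)
lemma G_z2: "G \<rho> [:0,1:] = (\<lambda>\<phi>. \<rho> * sin \<phi>)"
  by (simp add: G_def eval2_alt)

definition sh :: "nat \<Rightarrow> complex" where "sh n = of_nat n * (of_real pi / 2)"

lemma sh_Suc: "sh (Suc n) = sh n + of_real pi / 2"
  by (simp add: sh_def algebra_simps)

lemma hd_cos: "(deriv ^^ n) (\<lambda>\<phi>. c * cos \<phi>) = (\<lambda>\<phi>. c * cos (\<phi> + sh n))"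
proof (induction n)
  case 0 then show ?case by (simp add: sh_def)
next
  case (Suc n)
  have "deriv (\<lambda>\<phi>. c * cos (\<phi> + sh n)) = (\<lambda>\<phi>. c * cos (\<phi> + sh (Suc n)))"
  proof
    fix \<phi>
    have "((\<lambda>\<phi>. c * cos (\<phi> + sh n)) has_field_derivative c * (- sin (\<phi> + sh n))) (at \<phi>)"
      by (auto intro!: derivative_eq_intros)
    then have "deriv (\<lambda>\<phi>. c * cos (\<phi> + sh n)) \<phi> = c * (- sin (\<phi> + sh n))"
      by (rule DERIV_imp_deriv)
    also have "\<dots> = c * cos (\<phi> + sh (Suc n))"
      by (simp add: sh_Suc add.assoc[symmetric] cos_add)
    finally show "deriv (\<lambda>\<phi>. c * cos (\<phi> + sh n)) \<phi> = c * cos (\<phi> + sh (Suc n))" .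
  qed
  then show ?case using Suc by simp
qed

lemma hd_sin: "(deriv ^^ n) (\<lambda>\<phi>. c * sin \<phi>) = (\<lambda>\<phi>. c * sin (\<phi> + sh n))"
proof (induction n)
  case 0 then show ?case by (simp add: sh_def)
next
  case (Suc n)
  have "deriv (\<lambda>\<phi>. c * sin (\<phi> + sh n)) = (\<lambda>\<phi>. c * sin (\<phi> + sh (Suc n)))"
  proof
    fix \<phi>
    have "((\<lambda>\<phi>. c * sin (\<phi> + sh n)) has_field_derivative c * cos (\<phi> + sh n)) (at \<phi>)"
      by (auto intro!: derivative_eq_intros)
    then have "deriv (\<lambda>\<phi>. c * sin (\<phi> + sh n)) \<phi> = c * cos (\<phi> + sh n)"
      by (rule DERIV_imp_deriv)
    also have "\<dots> = c * sin (\<phi> + sh (Suc n))"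
      by (simp add: sh_Suc add.assoc[symmetric] sin_add)
    finally show "deriv (\<lambda>\<phi>. c * sin (\<phi> + sh n)) \<phi> = c * sin (\<phi> + sh (Suc n))" .
  qed
  then show ?case using Suc by simp
qed

definition okf :: "complex \<Rightarrow> complex poly poly \<Rightarrow> bool" where
  "okf \<alpha> f \<longleftrightarrow> (\<forall>\<rho>. G \<rho> f holomorphic_on UNIV) \<and>
      (\<forall>i. \<exists>p. \<forall>\<rho>. poly p \<rho> = (deriv ^^ i) (G \<rho> f) \<alpha>)"

lemma okf_add: "okf \<alpha> f \<Longrightarrow> okf \<alpha> g \<Longrightarrow> okf \<alpha> (f + g)"
  unfolding okf_def
proof (intro conjI allI)
  assume f: "(\<forall>\<rho>. G \<rho> f holomorphic_on UNIV) \<and> (\<forall>i. \<exists>p. \<forall>\<rho>. poly p \<rho> = (deriv ^^ i) (G \<rho> f) \<alpha>)"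
     and g: "(\<forall>\<rho>. G \<rho> g holomorphic_on UNIV) \<and> (\<forall>i. \<exists>p. \<forall>\<rho>. poly p \<rho> = (deriv ^^ i) (G \<rho> g) \<alpha>)"
  fix \<rho> show "G \<rho> (f + g) holomorphic_on UNIV"
    using f g by (simp add: G_add holomorphic_on_add)
next
  fix i
  assume f: "(\<forall>\<rho>. G \<rho> f holomorphic_on UNIV) \<and> (\<forall>i. \<exists>p. \<forall>\<rho>. poly p \<rho> = (deriv ^^ i) (G \<rho> f) \<alpha>)"
     and g: "(\<forall>\<rho>. G \<rho> g holomorphic_on UNIV) \<and> (\<forall>i. \<exists>p. \<forall>\<rho>. poly p \<rho> = (deriv ^^ i) (G \<rho> g) \<alpha>)"
  obtain p where p: "\<forall>\<rho>. poly p \<rho> = (deriv ^^ i) (G \<rho> f) \<alpha>" using f by blast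
  obtain q where q: "\<forall>\<rho>. poly q \<rho> = (deriv ^^ i) (G \<rho> g) \<alpha>" using g by blast
  have "\<forall>\<rho>. poly (p + q) \<rho> = (deriv ^^ i) (G \<rho> (f + g)) \<alpha>"
    using p q f g by (simp add: G_add higher_deriv_add[of _ UNIV])
  then show "\<exists>p. \<forall>\<rho>. poly p \<rho> = (deriv ^^ i) (G \<rho> (f + g)) \<alpha>" by blast
qed

lemma okf_mult: "okf \<alpha> f \<Longrightarrow> okf \<alpha> g \<Longrightarrow> okf \<alpha> (f * g)"
  unfolding okf_def
proof (intro conjI allI)
  assume f: "(\<forall>\<rho>. G \<rho> f holomorphic_on UNIV) \<and> (\<forall>i. \<exists>p. \<forall>\<rho>. poly p \<rho> = (deriv ^^ i) (G \<rho> f) \<alpha>)"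
     and g: "(\<forall>\<rho>. G \<rho> g holomorphic_on UNIV) \<and> (\<forall>i. \<exists>p. \<forall>\<rho>. poly p \<rho> = (deriv ^^ i) (G \<rho> g) \<alpha>)"
  fix \<rho> show "G \<rho> (f * g) holomorphic_on UNIV"
    using f g by (simp add: G_mult holomorphic_on_mult)
next
  fix n
  assume f: "(\<forall>\<rho>. G \<rho> f holomorphic_on UNIV) \<and> (\<forall>i. \<exists>p. \<forall>\<rho>. poly p \<rho> = (deriv ^^ i) (G \<rho> f) \<alpha>)"
     and g: "(\<forall>\<rho>. G \<rho> g holomorphic_on UNIV) \<and> (\<forall>i. \<exists>p. \<forall>\<rho>. poly p \<rho> = (deriv ^^ i) (G \<rho> g) \<alpha>)"
  obtain P where P: "\<forall>i \<rho>. poly (P i) \<rho> = (deriv ^^ i) (G \<rho> f) \<alpha>" using f by metis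
  obtain Q where Q: "\<forall>i \<rho>. poly (Q i) \<rho> = (deriv ^^ i) (G \<rho> g) \<alpha>" using g by metis
  have "\<forall>\<rho>. poly (\<Sum>j=0..n. smult (of_nat (n choose j)) (P j * Q (n - j))) \<rho>
      = (deriv ^^ n) (G \<rho> (f * g)) \<alpha>"
    using P Q f g by (simp add: G_mult higher_deriv_mult[of _ UNIV] poly_sum mult.assoc)
  then show "\<exists>p. \<forall>\<rho>. poly p \<rho> = (deriv ^^ n) (G \<rho> (f * g)) \<alpha>" by blast
qed

lemma okf_const: "okf \<alpha> [:[:c:]:]"
  unfolding okf_def G_const
  by (auto intro!: exI[of _ "if i = 0 then [:c:] else 0" for i])

lemma okf_z1: "okf \<alpha> [:[:0,1:]:]"
  unfolding okf_def G_z1 hd_cos[of \<rho> for \<rho>]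
  by (auto intro!: holomorphic_intros exI[of _ "[:0, cos (\<alpha> + sh i):]" for i])

lemma okf_z2: "okf \<alpha> [:0,1:]"
  unfolding okf_def G_z2 hd_sin[of \<rho> for \<rho>]
  by (auto intro!: holomorphic_intros exI[of _ "[:0, sin (\<alpha> + sh i):]" for i])

lemma okf_inner: "okf \<alpha> [:a:]"
proof (induction a)
  case 0 then show ?case using okf_const[of \<alpha> 0] by simp
next
  case (pCons c a)
  have "[:pCons c a:] = [:[:c:]:] + [:[:0,1:]:] * [:a:]" by simp
  then show ?case using pCons okf_add okf_mult okf_const okf_z1 by metis
qed

lemma okf_all: "okf \<alpha> f"
proof (induction f)
  case 0 then show ?case using okf_const[of \<alpha> 0] by simp
next
  case (pCons a f)
  have "pCons a f = [:a:] + [:0,1:] * f" by simp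
  then show ?case using pCons okf_add okf_mult okf_inner okf_z2 by metis
qed

lemma phi_deriv_char: "poly (phi_deriv f i \<alpha>) \<rho> = (deriv ^^ i) (G \<rho> f) \<alpha>"
proof -
  obtain p where p: "\<forall>\<rho>. poly p \<rho> = (deriv ^^ i) (G \<rho> f) \<alpha>"
    using okf_all[of \<alpha> f] unfolding okf_def by blast
  have "\<exists>!p. \<forall>\<rho>. poly p \<rho> = (deriv ^^ i) (G \<rho> f) \<alpha>"
  proof (rule ex1I[of _ p])
    fix q assume "\<forall>\<rho>. poly q \<rho> = (deriv ^^ i) (G \<rho> f) \<alpha>"
    then have "poly q = poly p" using p by auto
    then show "q = p" by (simp add: poly_eq_poly_eq_iff)
  qed (use p in auto)
  from theI'[OF this] show ?thesis unfolding phi_deriv_def G_def[symmetric] by blast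
qed

lemma phi_deriv_eqI: "(\<And>\<rho>. poly p \<rho> = (deriv ^^ i) (G \<rho> f) \<alpha>) \<Longrightarrow> phi_deriv f i \<alpha> = p"
  by (metis phi_deriv_char poly_eq_poly_eq_iff ext)

lemma holo_G: "G \<rho> f holomorphic_on UNIV"
  using okf_all unfolding okf_def by blast

lemma D_add: "phi_deriv (f + g) i \<alpha> = phi_deriv f i \<alpha> + phi_deriv g i \<alpha>"
  by (rule phi_deriv_eqI) (simp add: phi_deriv_char G_add higher_deriv_add[of _ UNIV] holo_G)

lemma D_mult: "phi_deriv (f * g) n \<alpha> =
  (\<Sum>j=0..n. smult (of_nat (n choose j)) (phi_deriv f j \<alpha> * phi_deriv g (n - j) \<alpha>))"
  by (rule phi_deriv_eqI)
     (simp add: phi_deriv_char G_mult higher_deriv_mult[of _ UNIV] holo_G poly_sum mult.assoc)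

lemma D_const: "phi_deriv [:[:c:]:] i \<alpha> = (if i = 0 then [:c:] else 0)"
  by (rule phi_deriv_eqI) (simp add: G_const)

lemma D_0: "poly (phi_deriv f 0 \<alpha>) \<rho> = eval2 f (\<rho> * cos \<alpha>) (\<rho> * sin \<alpha>)"
  by (simp add: phi_deriv_char G_def)

definition m_lin :: "complex \<Rightarrow> complex poly poly" where
  "m_lin \<alpha> = [: [:0, cos \<alpha>:], [:sin \<alpha>:] :]"

lemma D_gen:
  assumes "\<And>\<rho>. G \<rho> f = (\<lambda>\<phi>. (A * \<rho>) * sin \<phi> + (B * \<rho>) * cos \<phi>)"
  shows "phi_deriv f i \<alpha> = [:0, A * sin (\<alpha> + sh i) + B * cos (\<alpha> + sh i):]"
proof (rule phi_deriv_eqI)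
  fix \<rho>
  define C1 where "C1 = A * \<rho>"
  define C2 where "C2 = B * \<rho>"
  have "(deriv ^^ i) (G \<rho> f) \<alpha> =
      (deriv ^^ i) (\<lambda>\<phi>. C1 * sin \<phi>) \<alpha> + (deriv ^^ i) (\<lambda>\<phi>. C2 * cos \<phi>) \<alpha>"
    unfolding assms C1_def[symmetric] C2_def[symmetric]
    by (rule higher_deriv_add[of _ UNIV]) (auto intro!: holomorphic_intros)
  also have "\<dots> = C1 * sin (\<alpha> + sh i) + C2 * cos (\<alpha> + sh i)"
    by (simp only: hd_sin hd_cos)
  finally show "poly [:0, A * sin (\<alpha> + sh i) + B * cos (\<alpha> + sh i):] \<rho> = (deriv ^^ i) (G \<rho> f) \<alpha>"
    by (simp add: C1_def C2_def algebra_simps)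
qed

lemma D_l: "phi_deriv (l_lin \<alpha>) i \<alpha> = [:0, sin (sh i):]"
proof -
  have "phi_deriv (l_lin \<alpha>) i \<alpha> = [:0, cos \<alpha> * sin (\<alpha> + sh i) + (- sin \<alpha>) * cos (\<alpha> + sh i):]"
    by (rule D_gen) (auto simp: G_def eval2_alt l_lin_def algebra_simps)
  also have "cos \<alpha> * sin (\<alpha> + sh i) + (- sin \<alpha>) * cos (\<alpha> + sh i) = sin (sh i)"
    by (simp add: sin_diff[of "\<alpha> + sh i" \<alpha>, simplified] algebra_simps)
  finally show ?thesis .
qed

lemma D_m: "phi_deriv (m_lin \<alpha>) i \<alpha> = [:0, cos (sh i):]"
proof -
  have "phi_deriv (m_lin \<alpha>) i \<alpha> = [:0, sin \<alpha> * sin (\<alpha> + sh i) + cos \<alpha> * cos (\<alpha> + sh i):]"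
    by (rule D_gen) (auto simp: G_def eval2_alt m_lin_def algebra_simps)
  also have "sin \<alpha> * sin (\<alpha> + sh i) + cos \<alpha> * cos (\<alpha> + sh i) = cos (sh i)"
    by (simp add: cos_diff[of "\<alpha> + sh i" \<alpha>, simplified] algebra_simps)
  finally show ?thesis .
qed

definition cg :: "'a::comm_ring_1 \<Rightarrow> 'a \<Rightarrow> 'a \<Rightarrow> bool" where
  "cg e x y \<longleftrightarrow> e dvd x - y"

lemma cg_refl[simp]: "cg e x x" by (simp add: cg_def)
lemma cg_sym: "cg e x y \<Longrightarrow> cg e y x"
  unfolding cg_def by (metis dvd_minus_iff minus_diff_eq)
lemma cg_trans: "cg e x y \<Longrightarrow> cg e y z \<Longrightarrow> cg e x z"
  unfolding cg_def by (metis diff_add_cancel dvd_add add_diff_eq diff_diff_eq2)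
lemma cg_add: "cg e x y \<Longrightarrow> cg e x' y' \<Longrightarrow> cg e (x + x') (y + y')"
  unfolding cg_def by (metis add_diff_add dvd_add)
lemma cg_mult: "cg e x y \<Longrightarrow> cg e x' y' \<Longrightarrow> cg e (x * x') (y * y')"
proof -
  assume a: "cg e x y" "cg e x' y'"
  have "x * x' - y * y' = (x - y) * x' + y * (x' - y')" by (simp add: algebra_simps)
  then show ?thesis using a unfolding cg_def by (simp add: dvd_add dvd_mult2 dvd_mult)
qed
lemma cg_0: "cg e x 0 \<longleftrightarrow> e dvd x" by (simp add: cg_def)
lemma cls_eq_cg: "cls e x = cls e y \<longleftrightarrow> cg e x y" by (simp add: cls_eq_iff cg_def)

definition Trep :: "complex \<Rightarrow> nat \<Rightarrow> complex poly poly \<Rightarrow> complex poly poly" where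
  "Trep \<alpha> k f = (\<Sum>i<k. monom (smult (1 / fact i) (phi_deriv f i \<alpha>)) i)"

lemma Tmap_cls: "Tmap \<alpha> k f = cls (eps ^ k) (Trep \<alpha> k f)"
  by (simp add: Tmap_def Trep_def coset_tr)

lemma coeff_Trep: "coeff (Trep \<alpha> k f) i = (if i < k then smult (1 / fact i) (phi_deriv f i \<alpha>) else 0)"
  by (simp add: Trep_def coeff_sum coeff_monom)

lemma smult_sum2: "smult c (sum f A) = sum (\<lambda>i. smult c (f i)) A"
  by (induct A rule: infinite_finite_induct) (simp_all add: smult_add_right)

lemma eps_monom: "eps = monom 1 1"
  by (auto intro!: poly_eqI simp: eps_def coeff_pCons coeff_monom split: nat.splits)

lemma eps_pow: "eps ^ k = monom 1 k"
  by (simp add: eps_monom monom_power)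

lemma eps_dvd_iff: "eps ^ k dvd p \<longleftrightarrow> (\<forall>i<k. coeff p i = 0)"
  by (simp add: eps_pow monom_1_dvd_iff')

lemma eps_dvd_Trep: "eps ^ k dvd Trep \<alpha> k f \<longleftrightarrow> (\<forall>i<k. phi_deriv f i \<alpha> = 0)"
  by (simp add: eps_dvd_iff coeff_Trep)

lemma Trep_add: "Trep \<alpha> k (f + g) = Trep \<alpha> k f + Trep \<alpha> k g"
  unfolding Trep_def D_add smult_add_right add_monom[symmetric] sum.distrib by simp

lemma Trep_diff: "Trep \<alpha> k (f - g) = Trep \<alpha> k f - Trep \<alpha> k g"
  using Trep_add[of \<alpha> k "f - g" g] by simp

lemma Trep_const: "k \<ge> 1 \<Longrightarrow> Trep \<alpha> k [:[:c:]:] = [:[:c:]:]"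
  by (rule poly_eqI) (simp add: coeff_Trep D_const coeff_pCons split: nat.splits)

lemma Trep_one: "k \<ge> 1 \<Longrightarrow> Trep \<alpha> k 1 = 1"
  using Trep_const[of k \<alpha> 1] by (simp add: one_pCons)

lemma coeff_Trep_0: "k \<ge> 1 \<Longrightarrow> coeff (Trep \<alpha> k f) 0 = phi_deriv f 0 \<alpha>"
  by (simp add: coeff_Trep)

lemma D_mult_0: "phi_deriv (f * g) 0 \<alpha> = phi_deriv f 0 \<alpha> * phi_deriv g 0 \<alpha>"
  by (simp add: D_mult)

lemma Trep_mult: "cg (eps ^ k) (Trep \<alpha> k (f * g)) (Trep \<alpha> k f * Trep \<alpha> k g)"
  unfolding cg_def eps_dvd_iff
proof (intro allI impI)
  fix i assume i: "i < k"
  have "coeff (Trep \<alpha> k (f * g)) i =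
     (\<Sum>j=0..i. smult (1 / fact i * of_nat (i choose j)) (phi_deriv f j \<alpha> * phi_deriv g (i - j) \<alpha>))"
    using i by (simp add: coeff_Trep D_mult smult_sum2)
  also have "\<dots> = (\<Sum>j\<le>i. coeff (Trep \<alpha> k f) j * coeff (Trep \<alpha> k g) (i - j))"
    unfolding atLeast0AtMost
  proof (rule sum.cong[OF refl])
    fix j assume j: "j \<in> {..i}"
    then have "(1 / fact i * of_nat (i choose j) :: complex) = 1 / fact j * (1 / fact (i - j))"
      by (simp add: binomial_fact field_simps)
    then show "smult (1 / fact i * of_nat (i choose j)) (phi_deriv f j \<alpha> * phi_deriv g (i - j) \<alpha>) =
         coeff (Trep \<alpha> k f) j * coeff (Trep \<alpha> k g) (i - j)"
      using i j by (simp add: coeff_Trep)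
  qed
  also have "\<dots> = coeff (Trep \<alpha> k f * Trep \<alpha> k g) i" by (simp add: coeff_mult)
  finally show "coeff (Trep \<alpha> k (f * g) - Trep \<alpha> k f * Trep \<alpha> k g) i = 0" by simp
qed

lemma Trep_power: "k \<ge> 1 \<Longrightarrow> cg (eps ^ k) (Trep \<alpha> k (f ^ n)) (Trep \<alpha> k f ^ n)"
proof (induction n)
  case 0 then show ?case by (simp add: Trep_one)
next
  case (Suc n)
  have "cg (eps ^ k) (Trep \<alpha> k (f * f ^ n)) (Trep \<alpha> k f * Trep \<alpha> k (f ^ n))" by (rule Trep_mult)
  moreover have "cg (eps ^ k) (Trep \<alpha> k f * Trep \<alpha> k (f ^ n)) (Trep \<alpha> k f * Trep \<alpha> k f ^ n)"
    using Suc by (intro cg_mult) simp_all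
  ultimately show ?case by (auto intro: cg_trans)
qed

lemma sh_0: "sh 0 = 0" by (simp add: sh_def)
lemma sh_1: "sh (Suc 0) = of_real pi / 2" by (simp add: sh_def)

lemma D_l0: "phi_deriv (l_lin \<alpha>) 0 \<alpha> = 0" by (simp add: D_l sh_0)
lemma D_l1: "phi_deriv (l_lin \<alpha>) (Suc 0) \<alpha> = [:0, 1:]" by (simp add: D_l sh_1)


lemma ker_easy:
  assumes "k \<ge> 1" "l_lin \<alpha> ^ k dvd f" shows "eps ^ k dvd Trep \<alpha> k f"
proof -
  obtain g where f: "f = l_lin \<alpha> ^ k * g" using assms by (auto elim: dvdE)
  have "eps ^ 1 dvd Trep \<alpha> k (l_lin \<alpha>)"
    unfolding eps_dvd_iff using coeff_Trep_0[OF assms(1)] D_l0 by simp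
  then have "eps dvd Trep \<alpha> k (l_lin \<alpha>)" by simp

  then have "eps ^ k dvd Trep \<alpha> k (l_lin \<alpha>) ^ k" by (rule dvd_power_same)
  then have "eps ^ k dvd Trep \<alpha> k (l_lin \<alpha>) ^ k * Trep \<alpha> k g" by simp
  moreover have "cg (eps ^ k) (Trep \<alpha> k f) (Trep \<alpha> k (l_lin \<alpha>) ^ k * Trep \<alpha> k g)"
    unfolding f using Trep_mult Trep_power[OF assms(1)] cg_mult cg_trans cg_refl by blast
  ultimately show ?thesis unfolding cg_def by (metis diff_add_cancel dvd_add)
qed


lemma poly_poly_subst: "poly (poly f q) x = poly (poly f [:poly q x:]) x"
  by (induction f) simp_all

lemma line_dvd:
  assumes H: "\<And>\<rho>. eval2 f (\<rho> * cos \<alpha>) (\<rho> * sin \<alpha>) = 0"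
  shows "l_lin \<alpha> dvd f"
proof (cases "cos \<alpha> = 0")
  case False
  define c where "c = cos \<alpha>"
  define s where "s = sin \<alpha>"
  define q :: "complex poly" where "q = [:0, s / c:]"
  have c: "c \<noteq> 0" using False by (simp add: c_def)
  have "poly (poly f q) x = 0" for x
  proof -
    have "poly (poly f q) x = eval2 f x (s / c * x)"
      by (subst poly_poly_subst) (simp add: eval2_alt q_def mult.commute)


    also have "\<dots> = eval2 f ((x / c) * cos \<alpha>) ((x / c) * sin \<alpha>)"
    proof -
      have e1: "x / c * cos \<alpha> = x" and e2: "x / c * sin \<alpha> = s / c * x"
        using c by (simp_all add: c_def s_def)
      show ?thesis unfolding e1 e2 ..

    qed
    also have "\<dots> = 0" by (rule H)
    finally show ?thesis .
  qed
  then have r0: "poly f q = 0" using poly_all_0_iff_0 by blast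
  have fq: "f = [:-q, 1:] * synthetic_div f q"
    using synthetic_div_correct'[of q f] r0 by simp
  have l: "l_lin \<alpha> = smult [:c:] [:-q, 1:]"
    using c by (simp add: l_lin_def q_def c_def s_def)
  have "f = l_lin \<alpha> * smult [:1 / c:] (synthetic_div f q)"
  proof -
    have "l_lin \<alpha> * smult [:1 / c:] (synthetic_div f q) =
        smult ([:c:] * [:1 / c:]) ([:-q, 1:] * synthetic_div f q)"
      by (simp only: l mult_smult_left mult_smult_right smult_smult mult.commute[of "[:1 / c:]"])

    also have "[:c:] * [:1 / c:] = (1 :: complex poly)" using c by (simp add: one_pCons)
    finally show ?thesis using fq by simp
  qed
  then show ?thesis by (rule dvdI)
next
  case True
  define s where "s = sin \<alpha>"
  have "(sin \<alpha>)\<^sup>2 = 1" using True sin_cos_squared_add[of \<alpha>] by simp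
  then have s: "s \<noteq> 0" unfolding s_def by auto
  have "eval2 f 0 x2 = 0" for x2
  proof -
    have "x2 / s * sin \<alpha> = x2" using s by (simp add: s_def)
    then show ?thesis using H[of "x2 / s"] True by simp
  qed

  then have "map_poly (\<lambda>c. poly c 0) f = 0"
    unfolding eval2_def using poly_all_0_iff_0 by blast
  then have pc: "poly (coeff f j) 0 = 0" for j
  proof -
    assume m: "map_poly (\<lambda>c. poly c 0) f = 0"
    have "poly (coeff f j) 0 = coeff (map_poly (\<lambda>c. poly c 0) f) j" by (simp add: coeff_map_poly)
    then show ?thesis using m by simp
  qed
  define g where "g = map_poly (\<lambda>c. synthetic_div c 0) f"
  have fg: "f = smult [:0, 1:] g"
  proof (rule poly_eqI)
    fix j
    have "coeff f j = [:0, 1:] * synthetic_div (coeff f j) 0"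
      using synthetic_div_correct'[of 0 "coeff f j"] pc[of j] by simp
    then show "coeff f j = coeff (smult [:0, 1:] g) j"
      by (simp add: g_def coeff_map_poly)
  qed
  have l: "l_lin \<alpha> = [:[:0, - s:]:]" using True by (simp add: l_lin_def s_def)
  have "l_lin \<alpha> * smult [:- 1 / s:] g = smult ([:0, - s:] * [:- 1 / s:]) g"
    by (simp add: l mult_smult_right smult_smult)
  also have "[:0, - s:] * [:- 1 / s:] = [:0, 1:]" using s by simp
  finally have "f = l_lin \<alpha> * smult [:- 1 / s:] g" using fg by simp
  then show ?thesis by (rule dvdI)
qed

lemma line_dvd_D: "phi_deriv f 0 \<alpha> = 0 \<Longrightarrow> l_lin \<alpha> dvd f"
  by (rule line_dvd) (metis D_0 poly_0)

lemma ker_hard: "(\<forall>i<k. phi_deriv f i \<alpha> = 0) \<Longrightarrow> l_lin \<alpha> ^ k dvd f"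
proof (induction k arbitrary: f)
  case 0 then show ?case by simp
next
  case (Suc k f)
  then have "l_lin \<alpha> dvd f" using line_dvd_D by blast
  then obtain g where f: "f = l_lin \<alpha> * g" by (auto elim: dvdE)
  have gz: "phi_deriv g i \<alpha> = 0" if "i < k" for i
    using that
  proof (induction i rule: less_induct)
    case (less i)
    define T where "T j = smult (of_nat (Suc i choose j)) (phi_deriv (l_lin \<alpha>) j \<alpha> * phi_deriv g (Suc i - j) \<alpha>)" for j
    have "0 = phi_deriv f (Suc i) \<alpha>" using Suc.prems less.prems by simp
    also have "\<dots> = (\<Sum>j\<in>{0..Suc i}. T j)" by (simp add: f D_mult T_def)
    also have "\<dots> = T 1 + (\<Sum>j\<in>{0..Suc i} - {1}. T j)"
      by (rule sum.remove) auto
    also have "(\<Sum>j\<in>{0..Suc i} - {1}. T j) = 0"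
    proof (rule sum.neutral, intro ballI)
      fix j assume j: "j \<in> {0..Suc i} - {1}"
      show "T j = 0"
      proof (cases "j = 0")
        case True then show ?thesis by (simp add: T_def D_l0)
      next
        case False
        then have "Suc i - j < i" using j by auto
        then have "phi_deriv g (Suc i - j) \<alpha> = 0" using less.IH less.prems by simp
        then show ?thesis by (simp add: T_def)
      qed
    qed
    finally have "T 1 = 0" by simp
    then have "smult (of_nat (Suc i)) ([:0, 1:] * phi_deriv g i \<alpha>) = 0"
      by (simp add: T_def D_l1)
    then show "phi_deriv g i \<alpha> = 0" by (simp del: of_nat_Suc)
  qed
  then have "l_lin \<alpha> ^ k dvd g" using Suc.IH by blast
  then show ?case unfolding f by simp
qed

lemma ker_iff: "k \<ge> 1 \<Longrightarrow> eps ^ k dvd Trep \<alpha> k f \<longleftrightarrow> l_lin \<alpha> ^ k dvd f"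
proof
  assume "k \<ge> 1" "eps ^ k dvd Trep \<alpha> k f"
  then show "l_lin \<alpha> ^ k dvd f" using ker_hard[of k f \<alpha>] eps_dvd_Trep[of k \<alpha> f] by simp
next
  assume "k \<ge> 1" "l_lin \<alpha> ^ k dvd f"
  then show "eps ^ k dvd Trep \<alpha> k f" by (rule ker_easy)
qed

lemma eps_cancel:
  fixes p q :: "complex poly poly"
  assumes p0: "coeff p 0 \<noteq> 0" and d: "eps ^ k dvd p * q"
  shows "eps ^ k dvd q"
proof (cases "q = 0")
  case True then show ?thesis by simp
next
  case False
  have e: "eps = [:- 0, 1:]" by (simp add: eps_def)
  have p: "p \<noteq> 0" using p0 by auto
  then have pq: "p * q \<noteq> 0" using False by simp
  have "order 0 p = 0" using p0 order_root[of p 0] by (simp add: poly_0_coeff_0)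
  then have "order 0 (p * q) = order 0 q" using order_mult[OF pq] by simp
  then show ?thesis using d pq False unfolding e order_divides by simp
qed

lemma Rquot_eq: "Rquot \<alpha> k = type_ring Quot PIdl\<^bsub>type_ring\<^esub> (l_lin \<alpha> ^ k)"
  by (simp add: Rquot_def)
lemma Pk_eq: "Pk k = type_ring Quot PIdl\<^bsub>type_ring\<^esub> (eps ^ k)"
  by (simp add: Pk_def)

lemma l_nonzero: "l_lin \<alpha> \<noteq> 0"
proof
  assume "l_lin \<alpha> = 0"
  then have "phi_deriv (l_lin \<alpha>) (Suc 0) \<alpha> = phi_deriv [:[:0:]:] (Suc 0) \<alpha>" by simp
  moreover have "phi_deriv 0 (Suc 0) \<alpha> = 0" using D_const[of 0 "Suc 0" \<alpha>] by simp
  ultimately show False using D_l1 by simp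
qed

lemma l_pow_not_dvd: "k \<ge> 1 \<Longrightarrow> \<not> l_lin \<alpha> ^ k dvd l_lin \<alpha> ^ (k - 1)"
proof
  assume k: "k \<ge> 1" and "l_lin \<alpha> ^ k dvd l_lin \<alpha> ^ (k - 1)"
  then obtain r where r: "l_lin \<alpha> ^ (k - 1) = l_lin \<alpha> ^ k * r" by (auto elim: dvdE)
  obtain k' where k': "k = Suc k'" using k by (cases k) auto
  have "l_lin \<alpha> ^ k = l_lin \<alpha> ^ (k - 1) * l_lin \<alpha>" unfolding k' by (simp add: mult.commute)
  then have "l_lin \<alpha> ^ (k - 1) * 1 = l_lin \<alpha> ^ (k - 1) * (l_lin \<alpha> * r)"
    using r by (simp add: mult.assoc)
  then have 1: "1 = l_lin \<alpha> * r" using l_nonzero[of \<alpha>] by simp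
  have "phi_deriv 1 0 \<alpha> = [:1:]" using D_const[of 1 0 \<alpha>] by (simp add: one_pCons)
  moreover have "phi_deriv (l_lin \<alpha> * r) 0 \<alpha> = 0" by (simp add: D_mult_0 D_l0)
  ultimately show False using 1 by simp
qed

lemma nzd_Rquot:
  assumes k: "k \<ge> 1"
  shows "cls (l_lin \<alpha> ^ k) g \<in> nzd (Rquot \<alpha> k) \<longleftrightarrow> phi_deriv g 0 \<alpha> \<noteq> 0"
proof
  assume n: "cls (l_lin \<alpha> ^ k) g \<in> nzd (Rquot \<alpha> k)"
  show "phi_deriv g 0 \<alpha> \<noteq> 0"
  proof
    assume "phi_deriv g 0 \<alpha> = 0"
    then have "l_lin \<alpha> dvd g" by (rule line_dvd_D)
    then obtain g' where g: "g = l_lin \<alpha> * g'" by (auto elim: dvdE)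
    obtain k' where k': "k = Suc k'" using k by (cases k) auto
    have "g * l_lin \<alpha> ^ (k - 1) = l_lin \<alpha> ^ k * g'" unfolding g k' by (simp add: mult_ac)
    then have "mult (Rquot \<alpha> k) (cls (l_lin \<alpha> ^ k) g) (cls (l_lin \<alpha> ^ k) (l_lin \<alpha> ^ (k - 1)))
        = zero (Rquot \<alpha> k)"
      unfolding Rquot_eq quot_mult quot_zero cls_eq_cg cg_0 by simp
    moreover have "cls (l_lin \<alpha> ^ k) (l_lin \<alpha> ^ (k - 1)) \<in> carrier (Rquot \<alpha> k)"
      unfolding Rquot_eq quot_carrier by simp
    ultimately have "cls (l_lin \<alpha> ^ k) (l_lin \<alpha> ^ (k - 1)) = zero (Rquot \<alpha> k)"
      using n unfolding nzd_def by blast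
    then have "l_lin \<alpha> ^ k dvd l_lin \<alpha> ^ (k - 1)"
      unfolding Rquot_eq quot_zero cls_eq_cg cg_0 .
    then show False using l_pow_not_dvd[OF k] by blast
  qed
next
  assume d: "phi_deriv g 0 \<alpha> \<noteq> 0"
  have "a = zero (Rquot \<alpha> k)"
    if a: "a \<in> carrier (Rquot \<alpha> k)" "mult (Rquot \<alpha> k) (cls (l_lin \<alpha> ^ k) g) a = zero (Rquot \<alpha> k)" for a
  proof -
    obtain x where x: "a = cls (l_lin \<alpha> ^ k) x" using a(1) unfolding Rquot_eq quot_carrier by blast
    have "l_lin \<alpha> ^ k dvd g * x"
      using a(2) unfolding x Rquot_eq quot_mult quot_zero cls_eq_cg cg_0 .
    then have "eps ^ k dvd Trep \<alpha> k (g * x)" using ker_iff[OF k] by blast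
    moreover have "eps ^ k dvd Trep \<alpha> k (g * x) - Trep \<alpha> k g * Trep \<alpha> k x"
      using Trep_mult[of k \<alpha> g x] unfolding cg_def .
    ultimately have "eps ^ k dvd Trep \<alpha> k (g * x) - (Trep \<alpha> k (g * x) - Trep \<alpha> k g * Trep \<alpha> k x)"
      by (rule dvd_diff)
    then have "eps ^ k dvd Trep \<alpha> k g * Trep \<alpha> k x" by simp

    then have "eps ^ k dvd Trep \<alpha> k x"
      using eps_cancel[of "Trep \<alpha> k g" k "Trep \<alpha> k x"] d coeff_Trep_0[OF k] by simp
    then have "l_lin \<alpha> ^ k dvd x" using ker_iff[OF k] by blast
    then show ?thesis unfolding x Rquot_eq quot_zero cls_eq_cg cg_0 .
  qed
  moreover have "cls (l_lin \<alpha> ^ k) g \<in> carrier (Rquot \<alpha> k)"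
    unfolding Rquot_eq quot_carrier by simp
  ultimately show "cls (l_lin \<alpha> ^ k) g \<in> nzd (Rquot \<alpha> k)" unfolding nzd_def by blast
qed

lemma nzd_Pk:
  assumes "coeff p 0 \<noteq> 0"
  shows "cls (eps ^ k) p \<in> nzd (Pk k)"
proof -
  have "a = zero (Pk k)"
    if a: "a \<in> carrier (Pk k)" "mult (Pk k) (cls (eps ^ k) p) a = zero (Pk k)" for a
  proof -
    obtain x where x: "a = cls (eps ^ k) x" using a(1) unfolding Pk_eq quot_carrier by blast
    have "eps ^ k dvd p * x"
      using a(2) unfolding x Pk_eq quot_mult quot_zero cls_eq_cg cg_0 .
    then have "eps ^ k dvd x" using eps_cancel assms by blast
    then show ?thesis unfolding x Pk_eq quot_zero cls_eq_cg cg_0 .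
  qed
  moreover have "cls (eps ^ k) p \<in> carrier (Pk k)"
    unfolding Pk_eq quot_carrier by simp
  ultimately show ?thesis unfolding nzd_def by blast
qed

definition mc :: "complex poly \<Rightarrow> complex poly poly" where
  "mc q = map_poly (\<lambda>c. [:c:]) q"

lemma coeff_mc: "coeff (mc q) i = [:coeff q i:]"
  by (simp add: mc_def coeff_map_poly)

lemma mc_add: "mc (p + q) = mc p + mc q"
  by (rule poly_eqI) (simp add: coeff_mc)
lemma mc_diff: "mc (p - q) = mc p - mc q"
  by (rule poly_eqI) (simp add: coeff_mc)
lemma mc_smult: "mc (smult c q) = [:[:c:]:] * mc q"
  by (rule poly_eqI) (simp add: coeff_mc)
lemma mc_pCons: "mc (pCons a p) = pCons [:a:] (mc p)"
  by (simp add: mc_def map_poly_pCons)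
lemma mc_mult: "mc (p * q) = mc p * mc q"
proof (induction p)
  case 0 then show ?case by (simp add: mc_def)
next
  case (pCons a p)
  have "mc (pCons a p * q) = mc (smult a q) + mc (pCons 0 (p * q))" by (simp add: mc_add)
  also have "\<dots> = [:[:a:]:] * mc q + pCons 0 (mc p * mc q)"
    using pCons.IH by (simp add: mc_smult mc_pCons)
  also have "\<dots> = mc (pCons a p) * mc q" by (simp add: mc_pCons)
  finally show ?case .
qed
lemma mc_const: "mc [:c:] = [:[:c:]:]"
  by (simp add: mc_pCons) (simp add: mc_def)
lemma mc_one: "mc 1 = 1"
  using mc_const[of 1] by (simp add: one_pCons)
lemma mc_power: "mc (p ^ n) = mc p ^ n"
  by (induction n) (simp_all add: mc_one mc_mult)
lemma mc_x: "mc [:0, 1:] = eps"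
  by (simp add: mc_pCons eps_def) (simp add: mc_def)

lemma xpow: "([:0, 1:] :: 'a::comm_semiring_1 poly) ^ k = monom 1 k"
proof -
  have "([:0, 1:] :: 'a poly) = monom 1 1"
    by (rule poly_eqI) (simp add: coeff_pCons coeff_monom split: nat.split)
  then show ?thesis by (simp add: monom_power)
qed

lemma mc_dvd: "[:0, 1:] ^ k dvd q \<Longrightarrow> eps ^ k dvd mc q"
proof -
  assume "[:0, 1:] ^ k dvd q"
  then obtain r where "q = [:0, 1:] ^ k * r" by (auto elim: dvdE)
  then have "mc q = eps ^ k * mc r" by (simp add: mc_mult mc_power mc_x)
  then show ?thesis by simp
qed

lemma inv_mod:
  fixes p :: "complex poly"
  assumes p0: "coeff p 0 \<noteq> 0"
  shows "\<exists>v. [:0, 1:] ^ k dvd p * v - 1"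
proof (induction k)
  case 0 then show ?case by simp
next
  case (Suc k)
  then obtain v r where r: "p * v - 1 = monom 1 k * r" by (auto elim: dvdE simp: xpow)
  define c where "c = coeff r 0 / coeff p 0"
  define v' where "v' = v - monom c k"
  have m: "monom c k = monom 1 k * [:c:]"
    by (simp add: mult_monom flip: monom_0)
  have "p * v' - 1 = monom 1 k * (r - smult c p)"
    unfolding v'_def using r m by (simp add: algebra_simps)
  moreover have "coeff (r - smult c p) 0 = 0" using p0 by (simp add: c_def)
  then have "monom 1 1 dvd r - smult c p" unfolding monom_1_dvd_iff' by simp
  ultimately have "monom 1 k * monom 1 1 dvd p * v' - 1"
    by (simp add: mult_dvd_mono)
  then have "[:0, 1:] ^ Suc k dvd p * v' - 1" by (simp add: xpow mult_monom monom_Suc)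

  then show ?case by blast
qed

lemma tri:
  fixes S :: "complex poly poly set" and t0 :: "complex poly"
  assumes const: "\<And>c. [:[:c:]:] \<in> S"
    and add: "\<And>p q. p \<in> S \<Longrightarrow> q \<in> S \<Longrightarrow> p + q \<in> S"
    and mult: "\<And>p q. p \<in> S \<Longrightarrow> q \<in> S \<Longrightarrow> p * q \<in> S"
    and cong: "\<And>p q. p \<in> S \<Longrightarrow> eps ^ k dvd p - q \<Longrightarrow> q \<in> S"
    and t: "mc t0 \<in> S" "coeff t0 0 = 0" "1 < k \<Longrightarrow> coeff t0 1 = 1"
  shows "mc q \<in> S"
proof -
  have pw: "mc t0 ^ j \<in> S" for j
  proof (induction j)
    case 0 then show ?case using const[of 1] by (simp add: one_pCons)
  next
    case (Suc j) then show ?case using mult t(1) by simp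
  qed
  obtain t1 where t0: "t0 = pCons 0 t1" using t(2) by (cases t0) auto
  have "pCons 0 t1 = monom 1 1 * t1"
    by (rule poly_eqI) (simp add: coeff_monom_mult coeff_pCons split: nat.split)
  then have tj: "t0 ^ j = monom 1 j * t1 ^ j" for j
    by (simp add: t0 power_mult_distrib monom_power)
  have c1: "coeff (t0 ^ j) i = 0" if "i < j" for i j
    using that by (simp add: tj coeff_monom_mult)
  have c2: "coeff (t0 ^ j) j = 1" if "j < k" for j
  proof (cases "j = 0")
    case True then show ?thesis by simp
  next
    case False
    then have "coeff t1 0 = 1" using t(3) that by (simp add: t0)
    then show ?thesis by (simp add: tj coeff_monom_mult coeff_0_power)
  qed
  have main: "n \<le> k \<Longrightarrow> \<forall>q. (\<forall>i < k - n. coeff q i = 0) \<longrightarrow> mc q \<in> S" for n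
  proof (induction n)
    case 0
    show ?case
    proof (intro allI impI)
      fix q :: "complex poly" assume "\<forall>i < k - 0. coeff q i = 0"
      then have "[:0, 1:] ^ k dvd q" by (simp add: xpow monom_1_dvd_iff')
      then have "eps ^ k dvd mc q" by (rule mc_dvd)
      then have "eps ^ k dvd [:[:0:]:] - mc q" by simp
      then show "mc q \<in> S" using cong const by blast
    qed
  next
    case (Suc n)
    define j where "j = k - Suc n"
    have j: "j < k" "k - n = Suc j" using Suc.prems by (auto simp: j_def)
    show ?case
    proof (intro allI impI)
      fix q :: "complex poly" assume q: "\<forall>i < k - Suc n. coeff q i = 0"

      define q' where "q' = q - smult (coeff q j) (t0 ^ j)"
      have "\<forall>i < k - n. coeff q' i = 0"
      proof (intro allI impI)
        fix i assume "i < k - n"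
        then have "i < j \<or> i = j" using j by auto
        then show "coeff q' i = 0"
          using q c1 c2[OF j(1)] by (auto simp: q'_def j_def)
      qed
      then have "mc q' \<in> S" using Suc by simp
      moreover have "mc q = mc q' + [:[:coeff q j:]:] * mc t0 ^ j"
        by (simp add: q'_def mc_diff mc_smult mc_power)
      moreover have "[:[:coeff q j:]:] * mc t0 ^ j \<in> S" using mult const pw by blast
      ultimately show "mc q \<in> S" using add by simp

    qed
  qed
  show ?thesis using main[of k] by simp
qed

definition Sset :: "complex \<Rightarrow> nat \<Rightarrow> complex poly poly set" where
  "Sset \<alpha> k = {p. \<exists>f g. phi_deriv g 0 \<alpha> \<noteq> 0 \<and> cg (eps ^ k) (p * Trep \<alpha> k g) (Trep \<alpha> k f)}"

lemma cg_multL: "cg e x y \<Longrightarrow> cg e (z * x) (z * y)"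
  by (rule cg_mult) simp_all

lemma D1_0: "phi_deriv 1 0 \<alpha> = [:1:]"
  using D_const[of 1 0 \<alpha>] by (simp add: one_pCons)

lemma S_Trep: "k \<ge> 1 \<Longrightarrow> Trep \<alpha> k f \<in> Sset \<alpha> k"
  unfolding Sset_def using D1_0[of \<alpha>] Trep_one[of k \<alpha>]
  by (intro CollectI exI[of _ f] exI[of _ 1]) simp

lemma S_const: "k \<ge> 1 \<Longrightarrow> [:[:c:]:] \<in> Sset \<alpha> k"
  using S_Trep[of k \<alpha> "[:[:c:]:]"] Trep_const[of k \<alpha> c] by simp

lemma D0_mult_ne: "phi_deriv g1 0 \<alpha> \<noteq> 0 \<Longrightarrow> phi_deriv g2 0 \<alpha> \<noteq> 0 \<Longrightarrow> phi_deriv (g1 * g2) 0 \<alpha> \<noteq> 0"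
  by (simp add: D_mult_0)

lemma S_add:
  assumes p: "p \<in> Sset \<alpha> k" and q: "q \<in> Sset \<alpha> k"
  shows "p + q \<in> Sset \<alpha> k"
proof -
  obtain f1 g1 where 1: "phi_deriv g1 0 \<alpha> \<noteq> 0" "cg (eps ^ k) (p * Trep \<alpha> k g1) (Trep \<alpha> k f1)"
    using p unfolding Sset_def by blast
  obtain f2 g2 where 2: "phi_deriv g2 0 \<alpha> \<noteq> 0" "cg (eps ^ k) (q * Trep \<alpha> k g2) (Trep \<alpha> k f2)"
    using q unfolding Sset_def by blast
  let ?T = "Trep \<alpha> k"
  have "cg (eps ^ k) ((p + q) * ?T (g1 * g2)) ((p + q) * (?T g1 * ?T g2))"
    by (rule cg_multL) (rule Trep_mult)
  also have "(p + q) * (?T g1 * ?T g2) = (p * ?T g1) * ?T g2 + (q * ?T g2) * ?T g1"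
    by (simp add: algebra_simps)
  finally have a: "cg (eps ^ k) ((p + q) * ?T (g1 * g2)) ((p * ?T g1) * ?T g2 + (q * ?T g2) * ?T g1)" .
  have b: "cg (eps ^ k) ((p * ?T g1) * ?T g2 + (q * ?T g2) * ?T g1) (?T f1 * ?T g2 + ?T f2 * ?T g1)"
    using 1 2 by (intro cg_add cg_mult) simp_all
  have c: "cg (eps ^ k) (?T f1 * ?T g2 + ?T f2 * ?T g1) (?T (f1 * g2 + f2 * g1))"
    unfolding Trep_add by (intro cg_add cg_sym[OF Trep_mult])
  have "cg (eps ^ k) ((p + q) * ?T (g1 * g2)) (?T (f1 * g2 + f2 * g1))"
    using a b c cg_trans by blast
  then show ?thesis unfolding Sset_def using D0_mult_ne[OF 1(1) 2(1)] by blast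
qed

lemma S_mult:
  assumes p: "p \<in> Sset \<alpha> k" and q: "q \<in> Sset \<alpha> k"
  shows "p * q \<in> Sset \<alpha> k"
proof -
  obtain f1 g1 where 1: "phi_deriv g1 0 \<alpha> \<noteq> 0" "cg (eps ^ k) (p * Trep \<alpha> k g1) (Trep \<alpha> k f1)"
    using p unfolding Sset_def by blast
  obtain f2 g2 where 2: "phi_deriv g2 0 \<alpha> \<noteq> 0" "cg (eps ^ k) (q * Trep \<alpha> k g2) (Trep \<alpha> k f2)"
    using q unfolding Sset_def by blast
  let ?T = "Trep \<alpha> k"
  have "cg (eps ^ k) ((p * q) * ?T (g1 * g2)) ((p * q) * (?T g1 * ?T g2))"
    by (rule cg_multL) (rule Trep_mult)
  also have "(p * q) * (?T g1 * ?T g2) = (p * ?T g1) * (q * ?T g2)"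
    by (simp add: algebra_simps)
  finally have a: "cg (eps ^ k) ((p * q) * ?T (g1 * g2)) ((p * ?T g1) * (q * ?T g2))" .
  have b: "cg (eps ^ k) ((p * ?T g1) * (q * ?T g2)) (?T f1 * ?T f2)"
    using 1 2 by (intro cg_mult) simp_all
  have c: "cg (eps ^ k) (?T f1 * ?T f2) (?T (f1 * f2))"
    by (rule cg_sym[OF Trep_mult])
  have "cg (eps ^ k) ((p * q) * ?T (g1 * g2)) (?T (f1 * f2))"
    using a b c cg_trans by blast
  then show ?thesis unfolding Sset_def using D0_mult_ne[OF 1(1) 2(1)] by blast
qed

lemma S_cong:
  assumes p: "p \<in> Sset \<alpha> k" and d: "eps ^ k dvd p - q"
  shows "q \<in> Sset \<alpha> k"
proof -
  obtain f g where 1: "phi_deriv g 0 \<alpha> \<noteq> 0" "cg (eps ^ k) (p * Trep \<alpha> k g) (Trep \<alpha> k f)"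
    using p unfolding Sset_def by blast
  have "cg (eps ^ k) q p" using d cg_sym unfolding cg_def by blast
  then have "cg (eps ^ k) (q * Trep \<alpha> k g) (p * Trep \<alpha> k g)" by (rule cg_mult) simp
  then have "cg (eps ^ k) (q * Trep \<alpha> k g) (Trep \<alpha> k f)" using 1(2) cg_trans by blast
  then show ?thesis unfolding Sset_def using 1(1) by blast
qed

lemma S_sat:
  assumes p: "p * Trep \<alpha> k s \<in> Sset \<alpha> k" and s: "phi_deriv s 0 \<alpha> \<noteq> 0"
  shows "p \<in> Sset \<alpha> k"
proof -
  obtain f g where 1: "phi_deriv g 0 \<alpha> \<noteq> 0" "cg (eps ^ k) (p * Trep \<alpha> k s * Trep \<alpha> k g) (Trep \<alpha> k f)"
    using p unfolding Sset_def by blast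
  have "cg (eps ^ k) (p * Trep \<alpha> k (s * g)) (p * (Trep \<alpha> k s * Trep \<alpha> k g))"
    by (rule cg_multL) (rule Trep_mult)
  then have "cg (eps ^ k) (p * Trep \<alpha> k (s * g)) (Trep \<alpha> k f)"
    using 1(2) cg_trans by (simp add: mult.assoc) blast
  then show ?thesis unfolding Sset_def using D0_mult_ne[OF s 1(1)] by blast
qed

definition cs0 :: "nat \<Rightarrow> complex poly" where
  "cs0 k = (\<Sum>i<k. monom (cos (sh i) / fact i) i)"
definition sn0 :: "nat \<Rightarrow> complex poly" where
  "sn0 k = (\<Sum>i<k. monom (sin (sh i) / fact i) i)"

lemma coeff_cs0: "coeff (cs0 k) i = (if i < k then cos (sh i) / fact i else 0)"
  by (simp add: cs0_def coeff_sum coeff_monom)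
lemma coeff_sn0: "coeff (sn0 k) i = (if i < k then sin (sh i) / fact i else 0)"
  by (simp add: sn0_def coeff_sum coeff_monom)

lemma Trep_m: "Trep \<alpha> k (m_lin \<alpha>) = [:[:0, 1:]:] * mc (cs0 k)"
  by (rule poly_eqI) (simp add: coeff_Trep D_m coeff_mc coeff_cs0)
lemma Trep_l: "Trep \<alpha> k (l_lin \<alpha>) = [:[:0, 1:]:] * mc (sn0 k)"
  by (rule poly_eqI) (simp add: coeff_Trep D_l coeff_mc coeff_sn0)

lemma S_all:
  assumes k: "k \<ge> 1"
  shows "p \<in> Sset \<alpha> k"
proof -
  let ?S = "Sset \<alpha> k"
  let ?r = "[:[:0, 1:]:] :: complex poly poly"
  have c0: "coeff (cs0 k) 0 = 1" using k by (simp add: coeff_cs0 sh_0)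
  obtain v where v: "[:0, 1:] ^ k dvd cs0 k * v - 1" using inv_mod[of "cs0 k" k] c0 by auto
  have E1: "cg (eps ^ k) (mc (cs0 k * v)) 1"
    using mc_dvd[OF v] unfolding cg_def by (simp add: mc_diff mc_one)
  have v0: "coeff v 0 = 1"
  proof -
    have "[:0, 1:] ^ 1 dvd cs0 k * v - 1" using v k
      by (meson dvd_trans le_imp_power_dvd)
    then have "coeff (cs0 k * v - 1) 0 = 0" unfolding xpow monom_1_dvd_iff' by simp
    then show ?thesis using c0 by (simp add: coeff_mult_0)
  qed
  define t0 where "t0 = sn0 k * v"
  have t00: "coeff t0 0 = 0" by (simp add: t0_def coeff_mult_0 coeff_sn0 sh_0)
  have t01: "coeff t0 1 = 1" if "1 < k"
    using that v0 by (simp add: t0_def coeff_mult coeff_sn0 sh_0 sh_1)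
  have dm: "phi_deriv (m_lin \<alpha>) 0 \<alpha> \<noteq> 0" by (simp add: D_m sh_0)
  have "mc t0 * Trep \<alpha> k (m_lin \<alpha>) = (?r * mc (sn0 k)) * mc (cs0 k * v)"
    by (simp add: t0_def Trep_m mc_mult algebra_simps)
  moreover have "cg (eps ^ k) ((?r * mc (sn0 k)) * mc (cs0 k * v)) ((?r * mc (sn0 k)) * 1)"
    by (rule cg_multL) (rule E1)
  ultimately have "cg (eps ^ k) (Trep \<alpha> k (l_lin \<alpha>)) (mc t0 * Trep \<alpha> k (m_lin \<alpha>))"
    by (simp add: Trep_l cg_sym)
  then have "mc t0 * Trep \<alpha> k (m_lin \<alpha>) \<in> ?S"
    using S_cong S_Trep[OF k] unfolding cg_def by blast
  then have t: "mc t0 \<in> ?S" using S_sat dm by blast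
  have mcall: "mc q \<in> ?S" for q
    by (rule tri[of ?S k t0]) (use S_const[OF k] S_add S_mult S_cong t t00 t01 in auto)
  have "Trep \<alpha> k (m_lin \<alpha>) * mc v = ?r * mc (cs0 k * v)"
    by (simp add: Trep_m mc_mult algebra_simps)
  moreover have "cg (eps ^ k) (?r * mc (cs0 k * v)) (?r * 1)"
    by (rule cg_multL) (rule E1)
  ultimately have "cg (eps ^ k) (Trep \<alpha> k (m_lin \<alpha>) * mc v) ?r" by simp
  moreover have "Trep \<alpha> k (m_lin \<alpha>) * mc v \<in> ?S" using S_mult S_Trep[OF k] mcall by blast
  ultimately have rS: "?r \<in> ?S" using S_cong unfolding cg_def by blast
  have eS: "eps \<in> ?S" using mcall[of "[:0, 1:]"] by (simp add: mc_x)
  have inner: "[:a:] \<in> ?S" for a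
  proof (induction a)
    case 0 then show ?case using S_const[OF k, where c=0 and \<alpha>=\<alpha>] by simp
  next
    case (pCons c a)
    have "[:pCons c a:] = [:[:c:]:] + ?r * [:a:]" by simp
    then show ?case using pCons S_const[OF k] S_add S_mult rS by metis
  qed
  show ?thesis
  proof (induction p)
    case 0 then show ?case using S_const[OF k, where c=0 and \<alpha>=\<alpha>] by simp
  next
    case (pCons a p)
    have "pCons a p = [:a:] + eps * p" by (simp add: eps_def)
    then show ?case using pCons inner S_add S_mult eS by metis
  qed
qed

lemma Tmap_hom: "k \<ge> 1 \<Longrightarrow> Tmap \<alpha> k \<in> ring_hom type_ring (Pk k)"
proof (rule ring_hom_memI)
  assume k: "k \<ge> 1"
  fix x show "Tmap \<alpha> k x \<in> carrier (Pk k)" by (simp add: Tmap_cls Pk_eq quot_carrier)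
next
  fix x y :: "complex poly poly"
  show "Tmap \<alpha> k (x \<otimes>\<^bsub>type_ring\<^esub> y) = Tmap \<alpha> k x \<otimes>\<^bsub>Pk k\<^esub> Tmap \<alpha> k y"
    by (simp add: Tmap_cls Pk_eq quot_mult cls_eq_cg Trep_mult)
  show "Tmap \<alpha> k (x \<oplus>\<^bsub>type_ring\<^esub> y) = Tmap \<alpha> k x \<oplus>\<^bsub>Pk k\<^esub> Tmap \<alpha> k y"
    by (simp add: Tmap_cls Pk_eq quot_add Trep_add)
next
  assume k: "k \<ge> 1"
  show "Tmap \<alpha> k \<one>\<^bsub>type_ring\<^esub> = \<one>\<^bsub>Pk k\<^esub>"
    using k by (simp add: Tmap_cls Pk_eq quot_one Trep_one)
qed

lemma Tmap_eq_iff: "k \<ge> 1 \<Longrightarrow> Tmap \<alpha> k f = Tmap \<alpha> k g \<longleftrightarrow> l_lin \<alpha> ^ k dvd f - g"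
  by (simp add: Tmap_cls cls_eq_cg cg_def ker_iff flip: Trep_diff)

lemma qi: "k \<ge> 1 \<Longrightarrow> quot_induced (Tmap \<alpha> k) (cls (l_lin \<alpha> ^ k) f) = Tmap \<alpha> k f"
proof -
  assume k: "k \<ge> 1"
  have f: "f \<in> cls (l_lin \<alpha> ^ k) f" by (simp add: cls_def)
  define x where "x = (SOME x. x \<in> cls (l_lin \<alpha> ^ k) f)"
  have "x \<in> cls (l_lin \<alpha> ^ k) f" unfolding x_def using f by (rule someI)
  then have "l_lin \<alpha> ^ k dvd x - f" by (simp add: cls_def)
  then show ?thesis using k by (simp add: quot_induced_def Tmap_eq_iff flip: x_def)
qed

theorem lemma2p11:
  fixes \<alpha> :: complex and k :: nat
  assumes "k \<ge> 1"
  shows "Tmap \<alpha> k \<in> ring_hom type_ring (Pk k)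
     \<and> (\<forall>c f. Tmap \<alpha> k ([:[:c:]:] * f) = (Tmap \<alpha> k [:[:c:]:]) \<otimes>\<^bsub>Pk k\<^esub> (Tmap \<alpha> k f)
              \<and> Tmap \<alpha> k [:[:c:]:] = (PIdl\<^bsub>type_ring\<^esub> (eps ^ k)) +>\<^bsub>type_ring\<^esub> [:[:c:]:])
     \<and> a_kernel type_ring (Pk k) (Tmap \<alpha> k) = PIdl\<^bsub>type_ring\<^esub> (l_lin \<alpha> ^ k)
     \<and> quot_induced (Tmap \<alpha> k) \<in> ring_hom (Rquot \<alpha> k) (Pk k)
     \<and> inj_on (quot_induced (Tmap \<alpha> k)) (carrier (Rquot \<alpha> k))
     \<and> (\<forall>s \<in> nzd (Rquot \<alpha> k). quot_induced (Tmap \<alpha> k) s \<in> nzd (Pk k))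
     \<and> frac_map (Pk k) (quot_induced (Tmap \<alpha> k))
         \<in> ring_iso (total_frac (Rquot \<alpha> k)) (total_frac (Pk k))"
proof -
  note k = assms
  let ?h = "quot_induced (Tmap \<alpha> k)"
  have hom: "Tmap \<alpha> k \<in> ring_hom type_ring (Pk k)" using Tmap_hom[OF k] .
  have c2: "\<forall>c f. Tmap \<alpha> k ([:[:c:]:] * f) = (Tmap \<alpha> k [:[:c:]:]) \<otimes>\<^bsub>Pk k\<^esub> (Tmap \<alpha> k f)
              \<and> Tmap \<alpha> k [:[:c:]:] = (PIdl\<^bsub>type_ring\<^esub> (eps ^ k)) +>\<^bsub>type_ring\<^esub> [:[:c:]:]"
  proof (intro allI conjI)
    fix c f
    show "Tmap \<alpha> k ([:[:c:]:] * f) = (Tmap \<alpha> k [:[:c:]:]) \<otimes>\<^bsub>Pk k\<^esub> (Tmap \<alpha> k f)"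
      using ring_hom_mult[OF hom, of "[:[:c:]:]" f] by simp
    show "Tmap \<alpha> k [:[:c:]:] = (PIdl\<^bsub>type_ring\<^esub> (eps ^ k)) +>\<^bsub>type_ring\<^esub> [:[:c:]:]"
      using Trep_const[OF k, of \<alpha> c] unfolding Tmap_def Trep_def by simp

  qed
  have c3: "a_kernel type_ring (Pk k) (Tmap \<alpha> k) = PIdl\<^bsub>type_ring\<^esub> (l_lin \<alpha> ^ k)"
  proof -
    have T0: "zero (Pk k) = Tmap \<alpha> k 0"
      using Trep_const[OF k, of \<alpha> 0] by (simp add: Tmap_cls Pk_eq quot_zero)
    show ?thesis
      unfolding a_kernel_def' PIdl_tr T0 using Tmap_eq_iff[OF k, of \<alpha> _ 0] by auto
  qed

  have hhom: "?h \<in> ring_hom (Rquot \<alpha> k) (Pk k)"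
  proof (rule ring_hom_memI)
    fix x assume "x \<in> carrier (Rquot \<alpha> k)"
    then obtain f where x: "x = cls (l_lin \<alpha> ^ k) f" by (auto simp: Rquot_eq quot_carrier)
    show "?h x \<in> carrier (Pk k)" using x qi[OF k] by (simp add: Tmap_cls Pk_eq quot_carrier)
  next
    fix x y assume "x \<in> carrier (Rquot \<alpha> k)" "y \<in> carrier (Rquot \<alpha> k)"
    then obtain f g where x: "x = cls (l_lin \<alpha> ^ k) f" and y: "y = cls (l_lin \<alpha> ^ k) g"
      by (auto simp: Rquot_eq quot_carrier)
    show "?h (x \<otimes>\<^bsub>Rquot \<alpha> k\<^esub> y) = ?h x \<otimes>\<^bsub>Pk k\<^esub> ?h y"
      using ring_hom_mult[OF hom, of f g] by (simp add: x y Rquot_eq quot_mult qi[OF k])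
    show "?h (x \<oplus>\<^bsub>Rquot \<alpha> k\<^esub> y) = ?h x \<oplus>\<^bsub>Pk k\<^esub> ?h y"
      using ring_hom_add[OF hom, of f g] by (simp add: x y Rquot_eq quot_add qi[OF k])
  next
    show "?h \<one>\<^bsub>Rquot \<alpha> k\<^esub> = \<one>\<^bsub>Pk k\<^esub>"
      using ring_hom_one[OF hom] by (simp add: Rquot_eq quot_one qi[OF k])
  qed
  have inj: "inj_on ?h (carrier (Rquot \<alpha> k))"
  proof (rule inj_onI)
    fix x y assume "x \<in> carrier (Rquot \<alpha> k)" "y \<in> carrier (Rquot \<alpha> k)" and e: "?h x = ?h y"
    then obtain f g where x: "x = cls (l_lin \<alpha> ^ k) f" and y: "y = cls (l_lin \<alpha> ^ k) g"
      by (auto simp: Rquot_eq quot_carrier)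
    have "Tmap \<alpha> k f = Tmap \<alpha> k g" using e by (simp add: x y qi[OF k])
    then show "x = y" using Tmap_eq_iff[OF k] by (simp add: x y cls_eq_iff)
  qed
  have nz: "\<forall>s \<in> nzd (Rquot \<alpha> k). ?h s \<in> nzd (Pk k)"
  proof
    fix s assume s: "s \<in> nzd (Rquot \<alpha> k)"
    then have "s \<in> carrier (Rquot \<alpha> k)" by (simp add: nzd_def)
    then obtain g where g: "s = cls (l_lin \<alpha> ^ k) g" by (auto simp: Rquot_eq quot_carrier)
    have "phi_deriv g 0 \<alpha> \<noteq> 0" using s nzd_Rquot[OF k] by (simp add: g)
    then have "coeff (Trep \<alpha> k g) 0 \<noteq> 0" using coeff_Trep_0[OF k] by simp
    then show "?h s \<in> nzd (Pk k)" using nzd_Pk by (simp add: g qi[OF k] Tmap_cls)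
  qed
  have surj: "\<forall>b\<in>carrier (Pk k). \<exists>a\<in>carrier (Rquot \<alpha> k). \<exists>s\<in>nzd (Rquot \<alpha> k).
      b \<otimes>\<^bsub>Pk k\<^esub> ?h s = ?h a"
  proof
    fix b assume "b \<in> carrier (Pk k)"
    then obtain p where b: "b = cls (eps ^ k) p" by (auto simp: Pk_eq quot_carrier)
    obtain f g where fg: "phi_deriv g 0 \<alpha> \<noteq> 0" "cg (eps ^ k) (p * Trep \<alpha> k g) (Trep \<alpha> k f)"
      using S_all[OF k, of p \<alpha>] unfolding Sset_def by blast
    have "cls (l_lin \<alpha> ^ k) f \<in> carrier (Rquot \<alpha> k)" by (simp add: Rquot_eq quot_carrier)
    moreover have "cls (l_lin \<alpha> ^ k) g \<in> nzd (Rquot \<alpha> k)" using nzd_Rquot[OF k] fg(1) by simp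
    moreover have "b \<otimes>\<^bsub>Pk k\<^esub> ?h (cls (l_lin \<alpha> ^ k) g) = ?h (cls (l_lin \<alpha> ^ k) f)"
      using fg(2) by (simp add: b qi[OF k] Tmap_cls Pk_eq quot_mult cls_eq_cg)
    ultimately show "\<exists>a\<in>carrier (Rquot \<alpha> k). \<exists>s\<in>nzd (Rquot \<alpha> k). b \<otimes>\<^bsub>Pk k\<^esub> ?h s = ?h a"
      by blast
  qed
  have iso: "frac_map (Pk k) ?h \<in> ring_iso (total_frac (Rquot \<alpha> k)) (total_frac (Pk k))"
    by (rule frac_iso_gen) (use cring_quot hhom inj nz surj in \<open>simp_all add: Rquot_eq Pk_eq\<close>)
  show ?thesis using hom c2 c3 hhom inj nz iso by blast
qed

end
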